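(* Let $\mathbb{X}$ be a basic reverse differential restriction category. For any map $g:A\times B\to C$ define $$g^{\dagger[A]}:=(\iota_0\times 1_C)\,R[g]\,\pi_1:A\times C\to B,$$ where $\iota_0=\langle 1_A,0\rangle:A\to A\times B$. For $f:A\to B$ define $D[f]:=R[f]^{\dagger[A]}=(\iota_0\times 1_A)R[R[f]]\pi_1:A\times A\to B$. Then $\mathbb{X}$ satisfies axiom [RD.6] if and only if $D[f]^{\dagger[A]}=R[f]$ for every map $f$, i.e. $$(\iota_0\times 1_B)\,R[D[f]]\,\pi_1=R[f]\quad\text{for all } f:A\to B,$$ where here $\iota_0=\langle 1_A,0\rangle:A\to A\times A$.
   Context: Composition is written in diagrammatic order: $fg$ means "first $f$, then $g$". A restriction category is a category with an operation sending each $f:A\to B$ to a map $\bar f:A\to A$ such that $\bar f f=f$, $\bar f\bar g=\bar g\bar f$ (for $f,g$ with common domain), $\overline{\bar f g}=\bar f\bar g$, and $f\bar g=\overline{fg}\,f$. A map $f$ is total if $\bar f=1$. The category has restriction products if: - there is an object $1$ with a total map $!_A:A\to 1$ for each $A$ such that every $f:A\to1$ equals $\bar f\,!_A$; - for all $A,B$ there is an object $A\times B$ with total maps $\pi_0,\pi_1$ such that for all $f:C\to A$, $g:C\to B$ there is a unique $\langle f,g\rangle$ with $\langle f,g\rangle\pi_0=\bar g f$ and $\langle f,g\rangle\pi_1=\bar f g$. Write $f\times g=\langle\pi_0f,\pi_1g\rangle$. A Cartesian left additive restriction category is a restriction category with restriction products in which every hom-set is a commutative monoid $(+,0)$ such that: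 - $\overline{f+g}=\bar f\bar g$ and $\bar 0=1$; - $x(f+g)=xf+xg$ and $x0=\bar x 0$; - $(f+g)\pi_i=f\pi_i+g\pi_i$ and $0\pi_i=0$. Write $\iota_0=\langle 1,0\rangle$ and $\iota_1=\langle 0,1\rangle$. A basic reverse differential restriction category is a Cartesian left additive restriction category with an operation sending each $f:A\to B$ to $R[f]:A\times B\to A$ satisfying: - [RD.1] $R[f+g]=R[f]+R[g]$ and $R[0]=0$. - [RD.2] $\langle a,b+c\rangle R[f]=\langle a,b\rangle R[f]+\langle a,c\rangle R[f]$ and $\langle a,0\rangle R[f]=\overline{af}\,0$. - [RD.3] $R[\pi_j]=\pi_1\iota_j$. - [RD.4] $R[\langle f,g\rangle]=(1\times\pi_0)R[f]+(1\times\pi_1)R[g]$. - [RD.5] $R[fg]=\langle\pi_0,\langle\pi_0f,\pi_1\rangle R[g]\rangle R[f]$. - [RD.8] $\overline{R[f]}=\bar f\times 1$. - [RD.9] $R[\bar f]=(\bar f\times1)\pi_1$. Axiom [RD.6] is: for all $f:A\to B$, $$\langle 1_A\times\pi_0,\,0\times\pi_1\rangle(\iota_0\times 1)R[R[R[f]]]\pi_1=(1_A\times\pi_1)R[f]$$ as maps $A\times(B\times B)\to A$, where $0:A\to A$. *)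

theory Defs
  imports Main
begin

text \<open>Composition is diagrammatic: c_cmp C f g means "first f, then g".
Objects are all elements of type 'o; arrows are the elements m of type 'm with
c_arr C m.\<close>

record ('o, 'm) rdcat =
  c_arr  :: "'m \<Rightarrow> bool"
  c_dom  :: "'m \<Rightarrow> 'o"
  c_cod  :: "'m \<Rightarrow> 'o"
  c_cmp  :: "'m \<Rightarrow> 'm \<Rightarrow> 'm"
  c_idt  :: "'o \<Rightarrow> 'm"
  c_rst  :: "'m \<Rightarrow> 'm"
  c_trm  :: "'o"
  c_bang :: "'o \<Rightarrow> 'm"
  c_prd  :: "'o \<Rightarrow> 'o \<Rightarrow> 'o"
  c_pi0  :: "'o \<Rightarrow> 'o \<Rightarrow> 'm"
  c_pi1  :: "'o \<Rightarrow> 'o \<Rightarrow> 'm"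
  c_pair :: "'m \<Rightarrow> 'm \<Rightarrow> 'm"
  c_add  :: "'m \<Rightarrow> 'm \<Rightarrow> 'm"
  c_zer  :: "'o \<Rightarrow> 'o \<Rightarrow> 'm"
  c_rev  :: "'m \<Rightarrow> 'm"

definition hom :: "('o, 'm, 'x) rdcat_scheme \<Rightarrow> 'o \<Rightarrow> 'o \<Rightarrow> 'm \<Rightarrow> bool" where
  "hom C A B f \<longleftrightarrow> c_arr C f \<and> c_dom C f = A \<and> c_cod C f = B"

definition par :: "('o, 'm, 'x) rdcat_scheme \<Rightarrow> 'm \<Rightarrow> 'm \<Rightarrow> bool" where
  "par C f g \<longleftrightarrow> c_arr C f \<and> c_arr C g \<and> c_dom C f = c_dom C g \<and> c_cod C f = c_cod C g"

definition is_category :: "('o, 'm, 'x) rdcat_scheme \<Rightarrow> bool" where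
  "is_category C \<longleftrightarrow>
     (\<forall>A. hom C A A (c_idt C A)) \<and>
     (\<forall>f g. c_arr C f \<and> c_arr C g \<and> c_cod C f = c_dom C g \<longrightarrow>
        hom C (c_dom C f) (c_cod C g) (c_cmp C f g)) \<and>
     (\<forall>f. c_arr C f \<longrightarrow> c_cmp C (c_idt C (c_dom C f)) f = f \<and> c_cmp C f (c_idt C (c_cod C f)) = f) \<and>
     (\<forall>f g h. c_arr C f \<and> c_arr C g \<and> c_arr C h \<and> c_cod C f = c_dom C g \<and> c_cod C g = c_dom C h \<longrightarrow>
        c_cmp C (c_cmp C f g) h = c_cmp C f (c_cmp C g h))"

definition is_restriction :: "('o, 'm, 'x) rdcat_scheme \<Rightarrow> bool" where
  "is_restriction C \<longleftrightarrow>
     (\<forall>f. c_arr C f \<longrightarrow> hom C (c_dom C f) (c_dom C f) (c_rst C f)) \<and>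
     (\<forall>f. c_arr C f \<longrightarrow> c_cmp C (c_rst C f) f = f) \<and>
     (\<forall>f g. c_arr C f \<and> c_arr C g \<and> c_dom C f = c_dom C g \<longrightarrow>
        c_cmp C (c_rst C f) (c_rst C g) = c_cmp C (c_rst C g) (c_rst C f)) \<and>
     (\<forall>f g. c_arr C f \<and> c_arr C g \<and> c_dom C f = c_dom C g \<longrightarrow>
        c_rst C (c_cmp C (c_rst C f) g) = c_cmp C (c_rst C f) (c_rst C g)) \<and>
     (\<forall>f g. c_arr C f \<and> c_arr C g \<and> c_cod C f = c_dom C g \<longrightarrow>
        c_cmp C f (c_rst C g) = c_cmp C (c_rst C (c_cmp C f g)) f)"

definition total :: "('o, 'm, 'x) rdcat_scheme \<Rightarrow> 'm \<Rightarrow> bool" where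
  "total C f \<longleftrightarrow> c_rst C f = c_idt C (c_dom C f)"

definition has_restriction_products :: "('o, 'm, 'x) rdcat_scheme \<Rightarrow> bool" where
  "has_restriction_products C \<longleftrightarrow>
     (\<forall>A. hom C A (c_trm C) (c_bang C A) \<and> total C (c_bang C A)) \<and>
     (\<forall>A f. hom C A (c_trm C) f \<longrightarrow> f = c_cmp C (c_rst C f) (c_bang C A)) \<and>
     (\<forall>A B. hom C (c_prd C A B) A (c_pi0 C A B) \<and> total C (c_pi0 C A B) \<and>
            hom C (c_prd C A B) B (c_pi1 C A B) \<and> total C (c_pi1 C A B)) \<and>
     (\<forall>f g. c_arr C f \<and> c_arr C g \<and> c_dom C f = c_dom C g \<longrightarrow>
        (let X = c_dom C f; A = c_cod C f; B = c_cod C g in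
          hom C X (c_prd C A B) (c_pair C f g) \<and>
          c_cmp C (c_pair C f g) (c_pi0 C A B) = c_cmp C (c_rst C g) f \<and>
          c_cmp C (c_pair C f g) (c_pi1 C A B) = c_cmp C (c_rst C f) g \<and>
          (\<forall>h. hom C X (c_prd C A B) h \<and>
               c_cmp C h (c_pi0 C A B) = c_cmp C (c_rst C g) f \<and>
               c_cmp C h (c_pi1 C A B) = c_cmp C (c_rst C f) g \<longrightarrow> h = c_pair C f g)))"

definition tensor :: "('o, 'm, 'x) rdcat_scheme \<Rightarrow> 'm \<Rightarrow> 'm \<Rightarrow> 'm" where
  "tensor C f g = c_pair C (c_cmp C (c_pi0 C (c_dom C f) (c_dom C g)) f)
                           (c_cmp C (c_pi1 C (c_dom C f) (c_dom C g)) g)"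

definition iota0 :: "('o, 'm, 'x) rdcat_scheme \<Rightarrow> 'o \<Rightarrow> 'o \<Rightarrow> 'm" where
  "iota0 C A B = c_pair C (c_idt C A) (c_zer C A B)"

definition iota1 :: "('o, 'm, 'x) rdcat_scheme \<Rightarrow> 'o \<Rightarrow> 'o \<Rightarrow> 'm" where
  "iota1 C A B = c_pair C (c_zer C B A) (c_idt C B)"

definition is_CLARC :: "('o, 'm, 'x) rdcat_scheme \<Rightarrow> bool" where
  "is_CLARC C \<longleftrightarrow>
     is_category C \<and> is_restriction C \<and> has_restriction_products C \<and>
     (\<forall>A B. hom C A B (c_zer C A B)) \<and>
     (\<forall>f g. par C f g \<longrightarrow> hom C (c_dom C f) (c_cod C f) (c_add C f g)) \<and>
     (\<forall>f g h. par C f g \<and> par C g h \<longrightarrow> c_add C (c_add C f g) h = c_add C f (c_add C g h)) \<and>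
     (\<forall>f g. par C f g \<longrightarrow> c_add C f g = c_add C g f) \<and>
     (\<forall>f. c_arr C f \<longrightarrow> c_add C f (c_zer C (c_dom C f) (c_cod C f)) = f) \<and>
     (\<forall>f g. par C f g \<longrightarrow> c_rst C (c_add C f g) = c_cmp C (c_rst C f) (c_rst C g)) \<and>
     (\<forall>A B. c_rst C (c_zer C A B) = c_idt C A) \<and>
     (\<forall>x f g. c_arr C x \<and> par C f g \<and> c_cod C x = c_dom C f \<longrightarrow>
        c_cmp C x (c_add C f g) = c_add C (c_cmp C x f) (c_cmp C x g)) \<and>
     (\<forall>x B. c_arr C x \<longrightarrow>
        c_cmp C x (c_zer C (c_cod C x) B) = c_cmp C (c_rst C x) (c_zer C (c_dom C x) B)) \<and>
     (\<forall>f g A B. par C f g \<and> c_cod C f = c_prd C A B \<longrightarrow>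
        c_cmp C (c_add C f g) (c_pi0 C A B) = c_add C (c_cmp C f (c_pi0 C A B)) (c_cmp C g (c_pi0 C A B)) \<and>
        c_cmp C (c_add C f g) (c_pi1 C A B) = c_add C (c_cmp C f (c_pi1 C A B)) (c_cmp C g (c_pi1 C A B))) \<and>
     (\<forall>X A B. c_cmp C (c_zer C X (c_prd C A B)) (c_pi0 C A B) = c_zer C X A \<and>
              c_cmp C (c_zer C X (c_prd C A B)) (c_pi1 C A B) = c_zer C X B)"

definition is_basic_rdrc :: "('o, 'm, 'x) rdcat_scheme \<Rightarrow> bool" where
  "is_basic_rdrc C \<longleftrightarrow>
     is_CLARC C \<and>
     (\<forall>f. c_arr C f \<longrightarrow> hom C (c_prd C (c_dom C f) (c_cod C f)) (c_dom C f) (c_rev C f)) \<and>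
     \<comment> \<open>RD.1\<close>
     (\<forall>f g. par C f g \<longrightarrow> c_rev C (c_add C f g) = c_add C (c_rev C f) (c_rev C g)) \<and>
     (\<forall>A B. c_rev C (c_zer C A B) = c_zer C (c_prd C A B) A) \<and>
     \<comment> \<open>RD.2\<close>
     (\<forall>a b c f. c_arr C a \<and> c_arr C f \<and> c_cod C a = c_dom C f \<and> par C b c \<and>
        c_dom C b = c_dom C a \<and> c_cod C b = c_cod C f \<longrightarrow>
        c_cmp C (c_pair C a (c_add C b c)) (c_rev C f)
          = c_add C (c_cmp C (c_pair C a b) (c_rev C f)) (c_cmp C (c_pair C a c) (c_rev C f))) \<and>
     (\<forall>a f. c_arr C a \<and> c_arr C f \<and> c_cod C a = c_dom C f \<longrightarrow>
        c_cmp C (c_pair C a (c_zer C (c_dom C a) (c_cod C f))) (c_rev C f)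
          = c_cmp C (c_rst C (c_cmp C a f)) (c_zer C (c_dom C a) (c_dom C f))) \<and>
     \<comment> \<open>RD.3\<close>
     (\<forall>A B. c_rev C (c_pi0 C A B) = c_cmp C (c_pi1 C (c_prd C A B) A) (iota0 C A B) \<and>
            c_rev C (c_pi1 C A B) = c_cmp C (c_pi1 C (c_prd C A B) B) (iota1 C A B)) \<and>
     \<comment> \<open>RD.4\<close>
     (\<forall>f g. c_arr C f \<and> c_arr C g \<and> c_dom C f = c_dom C g \<longrightarrow>
        c_rev C (c_pair C f g)
          = c_add C (c_cmp C (tensor C (c_idt C (c_dom C f)) (c_pi0 C (c_cod C f) (c_cod C g))) (c_rev C f))
                    (c_cmp C (tensor C (c_idt C (c_dom C f)) (c_pi1 C (c_cod C f) (c_cod C g))) (c_rev C g))) \<and>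
     \<comment> \<open>RD.5\<close>
     (\<forall>f g. c_arr C f \<and> c_arr C g \<and> c_cod C f = c_dom C g \<longrightarrow>
        c_rev C (c_cmp C f g)
          = c_cmp C (c_pair C (c_pi0 C (c_dom C f) (c_cod C g))
                        (c_cmp C (c_pair C (c_cmp C (c_pi0 C (c_dom C f) (c_cod C g)) f)
                                           (c_pi1 C (c_dom C f) (c_cod C g)))
                                 (c_rev C g)))
                    (c_rev C f)) \<and>
     \<comment> \<open>RD.8\<close>
     (\<forall>f. c_arr C f \<longrightarrow> c_rst C (c_rev C f) = tensor C (c_rst C f) (c_idt C (c_cod C f))) \<and>
     \<comment> \<open>RD.9\<close>
     (\<forall>f. c_arr C f \<longrightarrow>
        c_rev C (c_rst C f) = c_cmp C (tensor C (c_rst C f) (c_idt C (c_dom C f))) (c_pi1 C (c_dom C f) (c_dom C f)))"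

definition RD6 :: "('o, 'm, 'x) rdcat_scheme \<Rightarrow> 'm \<Rightarrow> bool" where
  "RD6 C f \<longleftrightarrow>
     (let A = c_dom C f; B = c_cod C f in
       c_cmp C (c_cmp C (c_cmp C
           (c_pair C (tensor C (c_idt C A) (c_pi0 C B B)) (tensor C (c_zer C A A) (c_pi1 C B B)))
           (tensor C (iota0 C (c_prd C A B) A) (c_idt C (c_prd C A B))))
           (c_rev C (c_rev C (c_rev C f))))
         (c_pi1 C (c_prd C A B) A)
       = c_cmp C (tensor C (c_idt C A) (c_pi1 C B B)) (c_rev C f))"

definition dagger :: "('o, 'm, 'x) rdcat_scheme \<Rightarrow> 'o \<Rightarrow> 'o \<Rightarrow> 'm \<Rightarrow> 'm" where
  "dagger C A B g = c_cmp C (c_cmp C (tensor C (iota0 C A B) (c_idt C (c_cod C g))) (c_rev C g)) (c_pi1 C A B)"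

definition Dop :: "('o, 'm, 'x) rdcat_scheme \<Rightarrow> 'm \<Rightarrow> 'm" where
  "Dop C f = dagger C (c_dom C f) (c_cod C f) (c_rev C f)"

end

theory Submission
  imports Defs
begin

declare [[simp_depth_limit = 400]]

locale brc =
  fixes C :: "('o, 'm, 'x) rdcat_scheme"
  assumes ax: "is_basic_rdrc C"
begin

abbreviation arr where "arr \<equiv> c_arr C"
abbreviation dom where "dom \<equiv> c_dom C"
abbreviation cod where "cod \<equiv> c_cod C"
abbreviation cmp (infixr "\<cdot>" 70) where "f \<cdot> g \<equiv> c_cmp C f g"
abbreviation Id where "Id \<equiv> c_idt C"
abbreviation rs where "rs \<equiv> c_rst C"
abbreviation Pr where "Pr \<equiv> c_prd C"
abbreviation p0 where "p0 \<equiv> c_pi0 C"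
abbreviation p1 where "p1 \<equiv> c_pi1 C"
abbreviation pr where "pr \<equiv> c_pair C"
abbreviation add (infixl "\<oplus>" 65) where "f \<oplus> g \<equiv> c_add C f g"
abbreviation z where "z \<equiv> c_zer C"
abbreviation R where "R \<equiv> c_rev C"
abbreviation tn where "tn \<equiv> tensor C"

lemma CAT: "is_category C" using ax[unfolded is_basic_rdrc_def is_CLARC_def] by (elim conjE) assumption
lemma RST: "is_restriction C" using ax[unfolded is_basic_rdrc_def is_CLARC_def] by (elim conjE) assumption
lemma PRD: "has_restriction_products C" using ax[unfolded is_basic_rdrc_def is_CLARC_def] by (elim conjE) assumption
lemma CL: "is_CLARC C" using ax[unfolded is_basic_rdrc_def] by (elim conjE) assumption


lemmas CATc = CAT[unfolded is_category_def, THEN conjunct1]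
  CAT[unfolded is_category_def, THEN conjunct2, THEN conjunct1]
  CAT[unfolded is_category_def, THEN conjunct2, THEN conjunct2, THEN conjunct1]
  CAT[unfolded is_category_def, THEN conjunct2, THEN conjunct2, THEN conjunct2]
lemmas RSTc = RST[unfolded is_restriction_def, THEN conjunct1]
  RST[unfolded is_restriction_def, THEN conjunct2, THEN conjunct1]
  RST[unfolded is_restriction_def, THEN conjunct2, THEN conjunct2, THEN conjunct1]
  RST[unfolded is_restriction_def, THEN conjunct2, THEN conjunct2, THEN conjunct2, THEN conjunct1]
  RST[unfolded is_restriction_def, THEN conjunct2, THEN conjunct2, THEN conjunct2, THEN conjunct2]
lemmas PRDc = PRD[unfolded has_restriction_products_def, THEN conjunct1]
  PRD[unfolded has_restriction_products_def, THEN conjunct2, THEN conjunct1]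
  PRD[unfolded has_restriction_products_def, THEN conjunct2, THEN conjunct2, THEN conjunct1]
  PRD[unfolded has_restriction_products_def, THEN conjunct2, THEN conjunct2, THEN conjunct2]
lemmas CLc = CL[unfolded is_CLARC_def, THEN conjunct1]
  CL[unfolded is_CLARC_def, THEN conjunct2, THEN conjunct1]
  CL[unfolded is_CLARC_def, THEN conjunct2, THEN conjunct2, THEN conjunct1]
  CL[unfolded is_CLARC_def, THEN conjunct2, THEN conjunct2, THEN conjunct2, THEN conjunct1]
  CL[unfolded is_CLARC_def, THEN conjunct2, THEN conjunct2, THEN conjunct2, THEN conjunct2, THEN conjunct1]
  CL[unfolded is_CLARC_def, THEN conjunct2, THEN conjunct2, THEN conjunct2, THEN conjunct2, THEN conjunct2, THEN conjunct1]
  CL[unfolded is_CLARC_def, THEN conjunct2, THEN conjunct2, THEN conjunct2, THEN conjunct2, THEN conjunct2, THEN conjunct2, THEN conjunct1]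
  CL[unfolded is_CLARC_def, THEN conjunct2, THEN conjunct2, THEN conjunct2, THEN conjunct2, THEN conjunct2, THEN conjunct2, THEN conjunct2, THEN conjunct1]
  CL[unfolded is_CLARC_def, THEN conjunct2, THEN conjunct2, THEN conjunct2, THEN conjunct2, THEN conjunct2, THEN conjunct2, THEN conjunct2, THEN conjunct2, THEN conjunct1]
  CL[unfolded is_CLARC_def, THEN conjunct2, THEN conjunct2, THEN conjunct2, THEN conjunct2, THEN conjunct2, THEN conjunct2, THEN conjunct2, THEN conjunct2, THEN conjunct2, THEN conjunct1]
  CL[unfolded is_CLARC_def, THEN conjunct2, THEN conjunct2, THEN conjunct2, THEN conjunct2, THEN conjunct2, THEN conjunct2, THEN conjunct2, THEN conjunct2, THEN conjunct2, THEN conjunct2, THEN conjunct1]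
  CL[unfolded is_CLARC_def, THEN conjunct2, THEN conjunct2, THEN conjunct2, THEN conjunct2, THEN conjunct2, THEN conjunct2, THEN conjunct2, THEN conjunct2, THEN conjunct2, THEN conjunct2, THEN conjunct2, THEN conjunct1]
  CL[unfolded is_CLARC_def, THEN conjunct2, THEN conjunct2, THEN conjunct2, THEN conjunct2, THEN conjunct2, THEN conjunct2, THEN conjunct2, THEN conjunct2, THEN conjunct2, THEN conjunct2, THEN conjunct2, THEN conjunct2, THEN conjunct1]
  CL[unfolded is_CLARC_def, THEN conjunct2, THEN conjunct2, THEN conjunct2, THEN conjunct2, THEN conjunct2, THEN conjunct2, THEN conjunct2, THEN conjunct2, THEN conjunct2, THEN conjunct2, THEN conjunct2, THEN conjunct2, THEN conjunct2]
lemmas RDc = ax[unfolded is_basic_rdrc_def, THEN conjunct1]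
  ax[unfolded is_basic_rdrc_def, THEN conjunct2, THEN conjunct1]
  ax[unfolded is_basic_rdrc_def, THEN conjunct2, THEN conjunct2, THEN conjunct1]
  ax[unfolded is_basic_rdrc_def, THEN conjunct2, THEN conjunct2, THEN conjunct2, THEN conjunct1]
  ax[unfolded is_basic_rdrc_def, THEN conjunct2, THEN conjunct2, THEN conjunct2, THEN conjunct2, THEN conjunct1]
  ax[unfolded is_basic_rdrc_def, THEN conjunct2, THEN conjunct2, THEN conjunct2, THEN conjunct2, THEN conjunct2, THEN conjunct1]
  ax[unfolded is_basic_rdrc_def, THEN conjunct2, THEN conjunct2, THEN conjunct2, THEN conjunct2, THEN conjunct2, THEN conjunct2, THEN conjunct1]
  ax[unfolded is_basic_rdrc_def, THEN conjunct2, THEN conjunct2, THEN conjunct2, THEN conjunct2, THEN conjunct2, THEN conjunct2, THEN conjunct2, THEN conjunct1]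
  ax[unfolded is_basic_rdrc_def, THEN conjunct2, THEN conjunct2, THEN conjunct2, THEN conjunct2, THEN conjunct2, THEN conjunct2, THEN conjunct2, THEN conjunct2, THEN conjunct1]
  ax[unfolded is_basic_rdrc_def, THEN conjunct2, THEN conjunct2, THEN conjunct2, THEN conjunct2, THEN conjunct2, THEN conjunct2, THEN conjunct2, THEN conjunct2, THEN conjunct2, THEN conjunct1]
  ax[unfolded is_basic_rdrc_def, THEN conjunct2, THEN conjunct2, THEN conjunct2, THEN conjunct2, THEN conjunct2, THEN conjunct2, THEN conjunct2, THEN conjunct2, THEN conjunct2, THEN conjunct2]


named_theorems tys

lemma arr_Id[tys]: "arr (Id A)" and dom_Id[tys]: "dom (Id A) = A" and cod_Id[tys]: "cod (Id A) = A"
  using CATc(1)[unfolded hom_def] by blast+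

lemma cmp_ty[tys]: "arr f \<Longrightarrow> arr g \<Longrightarrow> cod f = dom g \<Longrightarrow> arr (f \<cdot> g)"
  and dom_cmp[tys]: "arr f \<Longrightarrow> arr g \<Longrightarrow> cod f = dom g \<Longrightarrow> dom (f \<cdot> g) = dom f"
  and cod_cmp[tys]: "arr f \<Longrightarrow> arr g \<Longrightarrow> cod f = dom g \<Longrightarrow> cod (f \<cdot> g) = cod g"
  using CATc(2)[unfolded hom_def] by blast+

lemma idl: "arr f \<Longrightarrow> dom f = A \<Longrightarrow> Id A \<cdot> f = f"
  and idr: "arr f \<Longrightarrow> cod f = A \<Longrightarrow> f \<cdot> Id A = f"
  using CATc(3)[unfolded hom_def] by blast+

lemma assoc: "arr f \<Longrightarrow> arr g \<Longrightarrow> arr h \<Longrightarrow> cod f = dom g \<Longrightarrow> cod g = dom h \<Longrightarrow>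
   (f \<cdot> g) \<cdot> h = f \<cdot> g \<cdot> h"
  using CATc(4) by blast

lemma arr_rs[tys]: "arr f \<Longrightarrow> arr (rs f)" and dom_rs[tys]: "arr f \<Longrightarrow> dom (rs f) = dom f"
  and cod_rs[tys]: "arr f \<Longrightarrow> cod (rs f) = dom f"
  using RSTc(1)[unfolded hom_def] by blast+

lemma rs1: "arr f \<Longrightarrow> rs f \<cdot> f = f"
  using RSTc(2) by blast
lemma rs2: "arr f \<Longrightarrow> arr g \<Longrightarrow> dom f = dom g \<Longrightarrow> rs f \<cdot> rs g = rs g \<cdot> rs f"
  using RSTc(3) by blast
lemma rs3: "arr f \<Longrightarrow> arr g \<Longrightarrow> dom f = dom g \<Longrightarrow> rs (rs f \<cdot> g) = rs f \<cdot> rs g"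
  using RSTc(4) by blast
lemma rs4: "arr f \<Longrightarrow> arr g \<Longrightarrow> cod f = dom g \<Longrightarrow> f \<cdot> rs g = rs (f \<cdot> g) \<cdot> f"
  using RSTc(5) by blast

lemma p0_ty[tys]: "arr (p0 A B)" "dom (p0 A B) = Pr A B" "cod (p0 A B) = A"
  and p1_ty[tys]: "arr (p1 A B)" "dom (p1 A B) = Pr A B" "cod (p1 A B) = B"
  using PRDc(3)[unfolded hom_def] by blast+
lemma p0_tot: "rs (p0 A B) = Id (Pr A B)" and p1_tot: "rs (p1 A B) = Id (Pr A B)"
  using PRDc(3)[unfolded hom_def total_def] by simp_all

lemma pairax: "arr f \<Longrightarrow> arr g \<Longrightarrow> dom f = dom g \<Longrightarrow>
          hom C (dom f) (Pr (cod f) (cod g)) (pr f g) \<and>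
          pr f g \<cdot> p0 (cod f) (cod g) = rs g \<cdot> f \<and>
          pr f g \<cdot> p1 (cod f) (cod g) = rs f \<cdot> g \<and>
          (\<forall>h. hom C (dom f) (Pr (cod f) (cod g)) h \<and>
               h \<cdot> p0 (cod f) (cod g) = rs g \<cdot> f \<and>
               h \<cdot> p1 (cod f) (cod g) = rs f \<cdot> g \<longrightarrow> h = pr f g)"
  using PRDc(4)[unfolded Let_def] by blast

lemma pair_ty[tys]: "arr f \<Longrightarrow> arr g \<Longrightarrow> dom f = dom g \<Longrightarrow> arr (pr f g)"
  using pairax[of f g, THEN conjunct1] unfolding hom_def by simp
lemma dom_pair[tys]: "arr f \<Longrightarrow> arr g \<Longrightarrow> dom f = dom g \<Longrightarrow> dom (pr f g) = dom f"
  using pairax[of f g, THEN conjunct1] unfolding hom_def by simp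
lemma cod_pair[tys]: "arr f \<Longrightarrow> arr g \<Longrightarrow> dom f = dom g \<Longrightarrow> cod (pr f g) = Pr (cod f) (cod g)"
  using pairax[of f g, THEN conjunct1] unfolding hom_def by simp

lemma pair_p0: "arr f \<Longrightarrow> arr g \<Longrightarrow> dom f = dom g \<Longrightarrow> cod f = A \<Longrightarrow> cod g = B \<Longrightarrow>
   pr f g \<cdot> p0 A B = rs g \<cdot> f"
  using pairax[of f g, THEN conjunct2, THEN conjunct1] by simp
lemma pair_p1: "arr f \<Longrightarrow> arr g \<Longrightarrow> dom f = dom g \<Longrightarrow> cod f = A \<Longrightarrow> cod g = B \<Longrightarrow>
   pr f g \<cdot> p1 A B = rs f \<cdot> g"
  using pairax[of f g, THEN conjunct2, THEN conjunct2, THEN conjunct1] by simp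

lemma pair_uniq: "arr f \<Longrightarrow> arr g \<Longrightarrow> dom f = dom g \<Longrightarrow> cod f = A \<Longrightarrow> cod g = B \<Longrightarrow>
   arr h \<Longrightarrow> dom h = dom f \<Longrightarrow> cod h = Pr A B \<Longrightarrow>
   h \<cdot> p0 A B = rs g \<cdot> f \<Longrightarrow> h \<cdot> p1 A B = rs f \<cdot> g \<Longrightarrow> h = pr f g"
  using pairax[of f g, THEN conjunct2, THEN conjunct2, THEN conjunct2, rule_format, of h] unfolding hom_def
  by simp

lemma tn_def': "tn f g = pr (p0 (dom f) (dom g) \<cdot> f) (p1 (dom f) (dom g) \<cdot> g)"
  by (simp add: tensor_def)

lemma tn_ty[tys]: "arr f \<Longrightarrow> arr g \<Longrightarrow> arr (tn f g)"
  and dom_tn[tys]: "arr f \<Longrightarrow> arr g \<Longrightarrow> dom (tn f g) = Pr (dom f) (dom g)"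
  and cod_tn[tys]: "arr f \<Longrightarrow> arr g \<Longrightarrow> cod (tn f g) = Pr (cod f) (cod g)"
  unfolding tn_def' by (simp_all add: tys)

lemma z_ty[tys]: "arr (z A B)" "dom (z A B) = A" "cod (z A B) = B"
  using CLc(4)[unfolded hom_def] by blast+

lemma add_ty[tys]: "arr f \<Longrightarrow> arr g \<Longrightarrow> dom f = dom g \<Longrightarrow> cod f = cod g \<Longrightarrow> arr (f \<oplus> g)"
  and dom_add[tys]: "arr f \<Longrightarrow> arr g \<Longrightarrow> dom f = dom g \<Longrightarrow> cod f = cod g \<Longrightarrow> dom (f \<oplus> g) = dom f"
  and cod_add[tys]: "arr f \<Longrightarrow> arr g \<Longrightarrow> dom f = dom g \<Longrightarrow> cod f = cod g \<Longrightarrow> cod (f \<oplus> g) = cod f"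
  using CLc(5)[unfolded hom_def par_def] by blast+

lemma iota0_ty[tys]: "arr (iota0 C A B)" "dom (iota0 C A B) = A" "cod (iota0 C A B) = Pr A B"
  unfolding iota0_def by (simp_all add: tys)
lemma iota1_ty[tys]: "arr (iota1 C A B)" "dom (iota1 C A B) = B" "cod (iota1 C A B) = Pr A B"
  unfolding iota1_def by (simp_all add: tys)

lemma Rax: "arr f \<Longrightarrow> hom C (Pr (dom f) (cod f)) (dom f) (R f)"
  using RDc(2)[unfolded par_def] by blast+
lemma R_ty[tys]: "arr f \<Longrightarrow> arr (R f)" and dom_R[tys]: "arr f \<Longrightarrow> dom (R f) = Pr (dom f) (cod f)"
  and cod_R[tys]: "arr f \<Longrightarrow> cod (R f) = dom f"
  using Rax[unfolded hom_def] by blast+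

lemma add_assoc: "arr f \<Longrightarrow> arr g \<Longrightarrow> arr h \<Longrightarrow> dom f = dom g \<Longrightarrow> cod f = cod g \<Longrightarrow>
   dom h = dom f \<Longrightarrow> cod h = cod f \<Longrightarrow> (f \<oplus> g) \<oplus> h = f \<oplus> (g \<oplus> h)"
  by (rule CLc(6)[unfolded par_def, rule_format]) auto
lemma add_comm: "arr f \<Longrightarrow> arr g \<Longrightarrow> dom f = dom g \<Longrightarrow> cod f = cod g \<Longrightarrow> f \<oplus> g = g \<oplus> f"
  by (rule CLc(7)[unfolded par_def, rule_format]) auto
lemma add_z: "arr f \<Longrightarrow> dom f = A \<Longrightarrow> cod f = B \<Longrightarrow> f \<oplus> z A B = f"
  using CLc(8)[rule_format, of f] by simp
lemma rs_add: "arr f \<Longrightarrow> arr g \<Longrightarrow> dom f = dom g \<Longrightarrow> cod f = cod g \<Longrightarrow> rs (f \<oplus> g) = rs f \<cdot> rs g"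
  by (rule CLc(9)[unfolded par_def, rule_format]) auto
lemma rs_z: "rs (z A B) = Id A"
  using CLc(10) by simp
lemma ldist: "arr x \<Longrightarrow> arr f \<Longrightarrow> arr g \<Longrightarrow> dom f = dom g \<Longrightarrow> cod f = cod g \<Longrightarrow> cod x = dom f \<Longrightarrow>
   x \<cdot> (f \<oplus> g) = x \<cdot> f \<oplus> x \<cdot> g"
  by (rule CLc(11)[unfolded par_def, rule_format]) auto
lemma lzero: "arr x \<Longrightarrow> cod x = A \<Longrightarrow> x \<cdot> z A B = rs x \<cdot> z (dom x) B"
  using CLc(12)[rule_format, of x B] by simp
lemma rdist0: "arr f \<Longrightarrow> arr g \<Longrightarrow> dom f = dom g \<Longrightarrow> cod f = Pr A B \<Longrightarrow> cod g = Pr A B \<Longrightarrow>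
   (f \<oplus> g) \<cdot> p0 A B = f \<cdot> p0 A B \<oplus> g \<cdot> p0 A B"
  by (rule CLc(13)[unfolded par_def, rule_format, THEN conjunct1]) auto
lemma rdist1: "arr f \<Longrightarrow> arr g \<Longrightarrow> dom f = dom g \<Longrightarrow> cod f = Pr A B \<Longrightarrow> cod g = Pr A B \<Longrightarrow>
   (f \<oplus> g) \<cdot> p1 A B = f \<cdot> p1 A B \<oplus> g \<cdot> p1 A B"
  by (rule CLc(13)[unfolded par_def, rule_format, THEN conjunct2]) auto
lemma z_p0: "z X (Pr A B) \<cdot> p0 A B = z X A" and z_p1: "z X (Pr A B) \<cdot> p1 A B = z X B"
  using CLc(14) by simp_all

lemma RD1: "arr f \<Longrightarrow> arr g \<Longrightarrow> dom f = dom g \<Longrightarrow> cod f = cod g \<Longrightarrow> R (f \<oplus> g) = R f \<oplus> R g"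
  using RDc(3)[unfolded par_def, rule_format, of f g] by simp
lemma RD1z: "R (z A B) = z (Pr A B) A"
  using RDc(4) by simp
lemma RD2: "arr a \<Longrightarrow> arr f \<Longrightarrow> cod a = dom f \<Longrightarrow> arr b \<Longrightarrow> arr c \<Longrightarrow> dom b = dom a \<Longrightarrow> dom c = dom a
   \<Longrightarrow> cod b = cod f \<Longrightarrow> cod c = cod f \<Longrightarrow>
   pr a (b \<oplus> c) \<cdot> R f = pr a b \<cdot> R f \<oplus> pr a c \<cdot> R f"
  using RDc(5)[unfolded par_def, rule_format, of a f b c] by simp
lemma RD2z: "arr a \<Longrightarrow> arr f \<Longrightarrow> cod a = dom f \<Longrightarrow>
   pr a (z (dom a) (cod f)) \<cdot> R f = rs (a \<cdot> f) \<cdot> z (dom a) (dom f)"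
  using RDc(6)[rule_format, of a f] by simp
lemma RD3a: "R (p0 A B) = p1 (Pr A B) A \<cdot> iota0 C A B"
  using RDc(7) by simp
lemma RD3b: "R (p1 A B) = p1 (Pr A B) B \<cdot> iota1 C A B"
  using RDc(7) by simp
lemma RD4: "arr f \<Longrightarrow> arr g \<Longrightarrow> dom f = dom g \<Longrightarrow> R (pr f g) =
   tn (Id (dom f)) (p0 (cod f) (cod g)) \<cdot> R f \<oplus> tn (Id (dom f)) (p1 (cod f) (cod g)) \<cdot> R g"
  using RDc(8)[rule_format, of f g] by simp
lemma RD5: "arr f \<Longrightarrow> arr g \<Longrightarrow> cod f = dom g \<Longrightarrow> R (f \<cdot> g) =
   pr (p0 (dom f) (cod g)) (pr (p0 (dom f) (cod g) \<cdot> f) (p1 (dom f) (cod g)) \<cdot> R g) \<cdot> R f"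
  using RDc(9)[rule_format, of f g] by simp
lemma RD8: "arr f \<Longrightarrow> rs (R f) = tn (rs f) (Id (cod f))"
  using RDc(10) by simp
lemma RD9: "arr f \<Longrightarrow> R (rs f) = tn (rs f) (Id (dom f)) \<cdot> p1 (dom f) (dom f)"
  using RDc(11) by simp


lemmas tyI = tys

lemma rs_Id: "rs (Id A) = Id A"
  using rs1[of "Id A"] idr[of "rs (Id A)" A] by (simp add: tys)

lemma rs_rs: "arr f \<Longrightarrow> rs (rs f) = rs f"
proof -
  assume f: "arr f"
  have "rs (rs f \<cdot> Id (dom f)) = rs f \<cdot> rs (Id (dom f))" using f by (simp add: rs3 tys)
  then show ?thesis using f by (simp add: rs_Id idr tys)
qed

lemma rs_idem: "arr f \<Longrightarrow> rs f \<cdot> rs f = rs f"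
  using rs3[of f f] rs1[of f] by simp

lemma rs_le_cmp: "arr f \<Longrightarrow> arr g \<Longrightarrow> cod f = dom g \<Longrightarrow> rs f \<cdot> rs (f \<cdot> g) = rs (f \<cdot> g)"
proof -
  assume a: "arr f" "arr g" "cod f = dom g"
  have "rs (rs f \<cdot> (f \<cdot> g)) = rs f \<cdot> rs (f \<cdot> g)" using a by (simp add: rs3 tys)
  moreover have "rs f \<cdot> (f \<cdot> g) = f \<cdot> g" using a by (simp add: assoc[symmetric] rs1 tys)
  ultimately show ?thesis by simp
qed

lemma rs_le_cmp': "arr f \<Longrightarrow> arr g \<Longrightarrow> cod f = dom g \<Longrightarrow> rs (f \<cdot> g) \<cdot> rs f = rs (f \<cdot> g)"
  using rs_le_cmp[of f g] rs2[of f "f \<cdot> g"] by (simp add: tys)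

lemma rs_tot: "arr f \<Longrightarrow> arr g \<Longrightarrow> cod f = dom g \<Longrightarrow> rs g = Id (dom g) \<Longrightarrow> rs (f \<cdot> g) = rs f"
proof -
  assume a: "arr f" "arr g" "cod f = dom g" "rs g = Id (dom g)"
  have "f = rs (f \<cdot> g) \<cdot> f" using a rs4[of f g] idr[of f "dom g"] by simp
  hence "rs f = rs (rs (f \<cdot> g) \<cdot> f)" by simp
  also have "\<dots> = rs (f \<cdot> g) \<cdot> rs f" using a by (simp add: rs3 tys)
  also have "\<dots> = rs (f \<cdot> g)" using a by (simp add: rs_le_cmp')
  finally show ?thesis by simp
qed

lemma rs_post: "arr f \<Longrightarrow> arr g \<Longrightarrow> cod f = dom g \<Longrightarrow> rs (f \<cdot> rs g) = rs (f \<cdot> g)"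
proof -
  assume a: "arr f" "arr g" "cod f = dom g"
  have "rs (f \<cdot> rs g) = rs (rs (f \<cdot> g) \<cdot> f)" using a by (simp add: rs4)
  also have "\<dots> = rs (f \<cdot> g) \<cdot> rs f" using a by (simp add: rs3 tys)
  also have "\<dots> = rs (f \<cdot> g)" using a by (simp add: rs_le_cmp')
  finally show ?thesis .
qed

lemma absorb: "arr x \<Longrightarrow> arr y \<Longrightarrow> dom x = dom y \<Longrightarrow> rs y \<cdot> rs x = rs y \<Longrightarrow> rs x \<cdot> y = y"
proof -
  assume a: "arr x" "arr y" "dom x = dom y" "rs y \<cdot> rs x = rs y"
  have "rs x \<cdot> y = rs x \<cdot> (rs y \<cdot> y)" using a by (simp add: rs1)
  also have "\<dots> = (rs x \<cdot> rs y) \<cdot> y" using a by (simp add: assoc tys)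
  also have "\<dots> = (rs y \<cdot> rs x) \<cdot> y" using a rs2[of x y] by simp
  also have "\<dots> = y" using a by (simp add: rs1)
  finally show ?thesis .
qed

lemma rs4c: "arr h \<Longrightarrow> arr g \<Longrightarrow> arr x \<Longrightarrow> cod h = dom g \<Longrightarrow> dom x = dom g \<Longrightarrow>
  h \<cdot> rs g \<cdot> x = rs (h \<cdot> g) \<cdot> h \<cdot> x"
  using rs4[of h g] by (simp add: assoc[symmetric] tys)

lemma rs_comm_cmp: "arr f \<Longrightarrow> arr g \<Longrightarrow> arr x \<Longrightarrow> dom f = dom g \<Longrightarrow> dom x = dom f \<Longrightarrow>
  rs f \<cdot> rs g \<cdot> x = rs g \<cdot> rs f \<cdot> x"
  by (simp add: assoc[symmetric] tys rs2)

lemma rs_idem_cmp: "arr f \<Longrightarrow> arr x \<Longrightarrow> dom x = dom f \<Longrightarrow> rs f \<cdot> rs f \<cdot> x = rs f \<cdot> x"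
  by (simp add: assoc[symmetric] tys rs_idem)

lemma p0_tot': "arr f \<Longrightarrow> cod f = Pr A B \<Longrightarrow> rs (f \<cdot> p0 A B) = rs f"
  by (rule rs_tot) (simp_all add: tys p0_tot)
lemma p1_tot': "arr f \<Longrightarrow> cod f = Pr A B \<Longrightarrow> rs (f \<cdot> p1 A B) = rs f"
  by (rule rs_tot) (simp_all add: tys p1_tot)

lemma p0_tot2: "arr f \<Longrightarrow> arr g \<Longrightarrow> cod f = dom g \<Longrightarrow> cod g = Pr A B \<Longrightarrow> rs (f \<cdot> g \<cdot> p0 A B) = rs (f \<cdot> g)"
  using p0_tot'[of "f \<cdot> g" A B] by (simp add: assoc tys)
lemma p1_tot2: "arr f \<Longrightarrow> arr g \<Longrightarrow> cod f = dom g \<Longrightarrow> cod g = Pr A B \<Longrightarrow> rs (f \<cdot> g \<cdot> p1 A B) = rs (f \<cdot> g)"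
  using p1_tot'[of "f \<cdot> g" A B] by (simp add: assoc tys)

lemma rs_pair: "arr f \<Longrightarrow> arr g \<Longrightarrow> dom f = dom g \<Longrightarrow> rs (pr f g) = rs f \<cdot> rs g"
proof -
  assume a: "arr f" "arr g" "dom f = dom g"
  have "rs (pr f g) = rs (pr f g \<cdot> p0 (cod f) (cod g))" using a by (simp add: p0_tot' tys)
  also have "\<dots> = rs (rs g \<cdot> f)" using a by (simp add: pair_p0)
  also have "\<dots> = rs g \<cdot> rs f" using a by (simp add: rs3)
  finally show ?thesis using a rs2[of f g] by simp
qed

lemma pair_eq: "arr f \<Longrightarrow> arr g \<Longrightarrow> dom f = dom g \<Longrightarrow> arr f' \<Longrightarrow> arr g' \<Longrightarrow> dom f' = dom f \<Longrightarrow> dom g' = dom f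
  \<Longrightarrow> cod f' = cod f \<Longrightarrow> cod g' = cod g \<Longrightarrow> rs g \<cdot> f = rs g' \<cdot> f' \<Longrightarrow> rs f \<cdot> g = rs f' \<cdot> g' \<Longrightarrow> pr f g = pr f' g'"
  by (rule pair_uniq[of f' g' "cod f" "cod g"]) (simp_all add: tys pair_p0 pair_p1)

lemma pr_pre: "arr h \<Longrightarrow> arr f \<Longrightarrow> arr g \<Longrightarrow> dom f = dom g \<Longrightarrow> cod h = dom f \<Longrightarrow>
   h \<cdot> pr f g = pr (h \<cdot> f) (h \<cdot> g)"
proof -
  assume a: "arr h" "arr f" "arr g" "dom f = dom g" "cod h = dom f"
  show ?thesis
  proof (rule pair_uniq[of _ _ "cod f" "cod g"])
    show "(h \<cdot> pr f g) \<cdot> p0 (cod f) (cod g) = rs (h \<cdot> g) \<cdot> h \<cdot> f"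
      using a by (simp add: assoc tys pair_p0 rs4c)
    show "(h \<cdot> pr f g) \<cdot> p1 (cod f) (cod g) = rs (h \<cdot> f) \<cdot> h \<cdot> g"
      using a by (simp add: assoc tys pair_p1 rs4c)
  qed (use a in \<open>simp_all add: tys\<close>)
qed



lemmas rsimp = assoc tys rs_rs rs_idem rs_idem_cmp rs_Id idl idr p0_tot p1_tot rs_z rs_pair rs3 rs1 rs2 rs_comm_cmp

lemma rs1c: "arr f \<Longrightarrow> arr x \<Longrightarrow> cod f = dom x \<Longrightarrow> rs f \<cdot> f \<cdot> x = f \<cdot> x"
  by (simp add: assoc[symmetric] tys rs1)
lemma rs1d: assumes "arr f" "arr g" "dom g = dom f" shows "rs f \<cdot> rs g \<cdot> f = rs g \<cdot> f"
proof -
  have "rs f \<cdot> rs g \<cdot> f = rs g \<cdot> rs f \<cdot> f" by (rule rs_comm_cmp) (use assms in simp_all)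
  also have "\<dots> = rs g \<cdot> f" using assms by (simp add: rs1)
  finally show ?thesis .
qed
lemma rs1dc: assumes "arr f" "arr g" "dom g = dom f" "arr x" "cod f = dom x" shows "rs f \<cdot> rs g \<cdot> f \<cdot> x = rs g \<cdot> f \<cdot> x"
proof -
  have "rs f \<cdot> rs g \<cdot> f \<cdot> x = rs g \<cdot> rs f \<cdot> f \<cdot> x" by (rule rs_comm_cmp) (use assms in \<open>simp_all add: tys\<close>)
  also have "\<dots> = rs g \<cdot> f \<cdot> x" using assms by (simp add: rs1c)
  finally show ?thesis .
qed
lemma rs1e: assumes "arr f" "arr g" "arr h" "dom g = dom f" "dom h = dom f" shows "rs f \<cdot> rs g \<cdot> rs h \<cdot> f = rs g \<cdot> rs h \<cdot> f"
proof -
  have "rs f \<cdot> rs g \<cdot> rs h \<cdot> f = rs g \<cdot> rs f \<cdot> rs h \<cdot> f" by (rule rs_comm_cmp) (use assms in \<open>simp_all add: tys\<close>)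
  also have "\<dots> = rs g \<cdot> rs h \<cdot> f" using assms by (simp add: rs1d)
  finally show ?thesis .
qed
lemma rs1ec: assumes "arr f" "arr g" "arr h" "dom g = dom f" "dom h = dom f" "arr x" "cod f = dom x" shows "rs f \<cdot> rs g \<cdot> rs h \<cdot> f \<cdot> x = rs g \<cdot> rs h \<cdot> f \<cdot> x"
proof -
  have "rs f \<cdot> rs g \<cdot> rs h \<cdot> f \<cdot> x = rs g \<cdot> rs f \<cdot> rs h \<cdot> f \<cdot> x" by (rule rs_comm_cmp) (use assms in \<open>simp_all add: tys\<close>)
  also have "\<dots> = rs g \<cdot> rs h \<cdot> f \<cdot> x" using assms by (simp add: rs1dc)
  finally show ?thesis .
qed

lemma rs_le_cmpc: "arr f \<Longrightarrow> arr g \<Longrightarrow> cod f = dom g \<Longrightarrow> arr w \<Longrightarrow> dom w = dom f \<Longrightarrow> rs f \<cdot> rs (f \<cdot> g) \<cdot> w = rs (f \<cdot> g) \<cdot> w"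
  using rs_le_cmp[of f g] by (simp add: assoc[symmetric] tys)
lemma rs_le_cmpd: assumes "arr f" "arr g" "cod f = dom g" "arr y" "dom y = dom f" shows "rs f \<cdot> rs y \<cdot> rs (f \<cdot> g) = rs y \<cdot> rs (f \<cdot> g)"
proof -
  have "rs f \<cdot> rs y \<cdot> rs (f \<cdot> g) = rs y \<cdot> rs f \<cdot> rs (f \<cdot> g)" by (rule rs_comm_cmp) (use assms in \<open>simp_all add: tys\<close>)
  also have "\<dots> = rs y \<cdot> rs (f \<cdot> g)" using assms by (simp add: rs_le_cmp)
  finally show ?thesis .
qed

lemmas rsimp2 = rsimp rs1c rs1d rs1dc rs1e rs1ec rs_le_cmp rs_le_cmpc rs_le_cmpd

definition le where "le x y \<longleftrightarrow> rs x \<cdot> rs y = rs x"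

lemma le_refl: "arr x \<Longrightarrow> le x x" unfolding le_def by (simp add: rs_idem)

lemma le_trans: "arr x \<Longrightarrow> arr y \<Longrightarrow> arr w \<Longrightarrow> dom x = dom y \<Longrightarrow> dom y = dom w \<Longrightarrow> le x y \<Longrightarrow> le y w \<Longrightarrow> le x w"
  unfolding le_def
proof -
  assume a: "arr x" "arr y" "arr w" "dom x = dom y" "dom y = dom w" and h: "rs x \<cdot> rs y = rs x" "rs y \<cdot> rs w = rs y"
  have "rs x \<cdot> rs w = (rs x \<cdot> rs y) \<cdot> rs w" using h by simp
  also have "\<dots> = rs x \<cdot> (rs y \<cdot> rs w)" using a by (simp add: assoc tys)
  also have "\<dots> = rs x" using h by simp
  finally show "rs x \<cdot> rs w = rs x" .
qed

lemma le_cmp: "arr f \<Longrightarrow> arr g \<Longrightarrow> cod f = dom g \<Longrightarrow> le (f \<cdot> g) f"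
  unfolding le_def by (rule rs_le_cmp')

lemma le_cmpI: "arr f \<Longrightarrow> arr g \<Longrightarrow> cod f = dom g \<Longrightarrow> arr y \<Longrightarrow> dom y = dom f \<Longrightarrow> le f y \<Longrightarrow> le (f \<cdot> g) y"
  by (rule le_trans[OF _ _ _ _ _ le_cmp]) (simp_all add: tys)

lemma le_pair1: "arr f \<Longrightarrow> arr g \<Longrightarrow> dom f = dom g \<Longrightarrow> le (pr f g) f"
  unfolding le_def by (simp add: rs_pair rsimp rs_comm_cmp)
lemma le_pair2: "arr f \<Longrightarrow> arr g \<Longrightarrow> dom f = dom g \<Longrightarrow> le (pr f g) g"
  unfolding le_def by (simp add: rs_pair rsimp rs_comm_cmp)

lemma le_pairI1: "arr f \<Longrightarrow> arr g \<Longrightarrow> dom f = dom g \<Longrightarrow> arr y \<Longrightarrow> dom y = dom f \<Longrightarrow> le f y \<Longrightarrow> le (pr f g) y"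
  by (rule le_trans[OF _ _ _ _ _ le_pair1]) (simp_all add: tys)
lemma le_pairI2: "arr f \<Longrightarrow> arr g \<Longrightarrow> dom f = dom g \<Longrightarrow> arr y \<Longrightarrow> dom y = dom f \<Longrightarrow> le g y \<Longrightarrow> le (pr f g) y"
  by (rule le_trans[OF _ _ _ _ _ le_pair2]) (simp_all add: tys)

lemma le_rs: "arr e \<Longrightarrow> arr f \<Longrightarrow> dom e = dom f \<Longrightarrow> le (rs e \<cdot> f) e"
  unfolding le_def by (simp add: rsimp rs_comm_cmp)
lemma le_rsI: "arr e \<Longrightarrow> arr f \<Longrightarrow> dom e = dom f \<Longrightarrow> arr y \<Longrightarrow> dom y = dom f \<Longrightarrow> le f y \<Longrightarrow> le (rs e \<cdot> f) y"
  unfolding le_def by (simp add: rsimp rs_comm_cmp)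

lemma le_addb1: "arr f \<Longrightarrow> arr g \<Longrightarrow> dom f = dom g \<Longrightarrow> cod f = cod g \<Longrightarrow> le (f \<oplus> g) f"
  unfolding le_def by (simp add: rsimp rs_add)
lemma le_addb2: "arr f \<Longrightarrow> arr g \<Longrightarrow> dom f = dom g \<Longrightarrow> cod f = cod g \<Longrightarrow> le (f \<oplus> g) g"
  unfolding le_def by (simp add: rsimp rs_add)
lemma le_add1: "arr f \<Longrightarrow> arr g \<Longrightarrow> dom f = dom g \<Longrightarrow> cod f = cod g \<Longrightarrow> arr y \<Longrightarrow> dom y = dom f \<Longrightarrow> le f y \<Longrightarrow> le (f \<oplus> g) y"
  by (rule le_trans[OF _ _ _ _ _ le_addb1]) (simp_all add: tys)
lemma le_add2: "arr f \<Longrightarrow> arr g \<Longrightarrow> dom f = dom g \<Longrightarrow> cod f = cod g \<Longrightarrow> arr y \<Longrightarrow> dom y = dom f \<Longrightarrow> le g y \<Longrightarrow> le (f \<oplus> g) y"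
  by (rule le_trans[OF _ _ _ _ _ le_addb2]) (simp_all add: tys)

lemma le_absorb: "arr x \<Longrightarrow> arr y \<Longrightarrow> dom x = dom y \<Longrightarrow> le y x \<Longrightarrow> rs x \<cdot> y = y"
  unfolding le_def by (rule absorb)

lemma le_absorbc: "arr x \<Longrightarrow> arr y \<Longrightarrow> dom x = dom y \<Longrightarrow> le y x \<Longrightarrow> arr w \<Longrightarrow> cod y = dom w \<Longrightarrow> rs x \<cdot> y \<cdot> w = y \<cdot> w"
  using le_absorb[of x y] by (simp add: assoc[symmetric] tys)

lemma pr_rs_l: "arr e \<Longrightarrow> arr f \<Longrightarrow> arr g \<Longrightarrow> dom e = dom f \<Longrightarrow> dom f = dom g \<Longrightarrow>
  pr (rs e \<cdot> f) g = rs e \<cdot> pr f g"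
proof -
  assume a: "arr e" "arr f" "arr g" "dom e = dom f" "dom f = dom g"
  have "rs e \<cdot> pr f g = pr (rs e \<cdot> f) (rs e \<cdot> g)" using a by (simp add: pr_pre tys)
  also have "\<dots> = pr (rs e \<cdot> f) g"
    by (rule pair_eq) (use a in \<open>simp_all add: rsimp rs_comm_cmp\<close>)
  finally show ?thesis by simp
qed

lemma pr_rs_r: "arr e \<Longrightarrow> arr f \<Longrightarrow> arr g \<Longrightarrow> dom e = dom f \<Longrightarrow> dom f = dom g \<Longrightarrow>
  pr f (rs e \<cdot> g) = rs e \<cdot> pr f g"
proof -
  assume a: "arr e" "arr f" "arr g" "dom e = dom f" "dom f = dom g"
  have "rs e \<cdot> pr f g = pr (rs e \<cdot> f) (rs e \<cdot> g)" using a by (simp add: pr_pre tys)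
  also have "\<dots> = pr f (rs e \<cdot> g)"
    by (rule pair_eq) (use a in \<open>simp_all add: rsimp rs_comm_cmp\<close>)
  finally show ?thesis by simp
qed

lemma pair_p0c: "arr f \<Longrightarrow> arr g \<Longrightarrow> dom f = dom g \<Longrightarrow> cod f = A \<Longrightarrow> cod g = B \<Longrightarrow> arr x \<Longrightarrow> dom x = A \<Longrightarrow>
   pr f g \<cdot> p0 A B \<cdot> x = rs g \<cdot> f \<cdot> x"
  using pair_p0[of f g A B] by (simp add: assoc[symmetric] tys)
lemma pair_p1c: "arr f \<Longrightarrow> arr g \<Longrightarrow> dom f = dom g \<Longrightarrow> cod f = A \<Longrightarrow> cod g = B \<Longrightarrow> arr x \<Longrightarrow> dom x = B \<Longrightarrow>
   pr f g \<cdot> p1 A B \<cdot> x = rs f \<cdot> g \<cdot> x"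
  using pair_p1[of f g A B] by (simp add: assoc[symmetric] tys)

lemma pr_prec: "arr h \<Longrightarrow> arr f \<Longrightarrow> arr g \<Longrightarrow> dom f = dom g \<Longrightarrow> cod h = dom f \<Longrightarrow> arr x \<Longrightarrow> dom x = Pr (cod f) (cod g) \<Longrightarrow>
   h \<cdot> pr f g \<cdot> x = pr (h \<cdot> f) (h \<cdot> g) \<cdot> x"
  using pr_pre[of h f g] by (simp add: assoc[symmetric] tys)

lemma tn_pair_gen: "arr a \<Longrightarrow> arr b \<Longrightarrow> dom a = dom b \<Longrightarrow> arr h \<Longrightarrow> arr k \<Longrightarrow> cod a = dom h \<Longrightarrow> cod b = dom k \<Longrightarrow>
   pr a b \<cdot> tn h k = pr (rs b \<cdot> a \<cdot> h) (rs a \<cdot> b \<cdot> k)"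
  unfolding tn_def' by (simp add: pr_pre tys pair_p0c pair_p1c)

lemma tn_pair: "arr a \<Longrightarrow> arr b \<Longrightarrow> dom a = dom b \<Longrightarrow> arr h \<Longrightarrow> arr k \<Longrightarrow> cod a = dom h \<Longrightarrow> cod b = dom k \<Longrightarrow>
   rs h = Id (dom h) \<Longrightarrow> rs k = Id (dom k) \<Longrightarrow>
   pr a b \<cdot> tn h k = pr (a \<cdot> h) (b \<cdot> k)"
proof -
  assume a: "arr a" "arr b" "dom a = dom b" "arr h" "arr k" "cod a = dom h" "cod b = dom k"
    "rs h = Id (dom h)" "rs k = Id (dom k)"
  have "pr a b \<cdot> tn h k = pr (rs b \<cdot> a \<cdot> h) (rs a \<cdot> b \<cdot> k)" using a by (simp add: tn_pair_gen)
  also have "\<dots> = pr (a \<cdot> h) (b \<cdot> k)"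
    by (rule pair_eq) (use a in \<open>simp_all add: rsimp2 rs_tot\<close>)
  finally show ?thesis .
qed


lemmas le_intros = le_refl le_cmpI le_pairI1 le_pairI2 le_rsI le_add1 le_add2



lemma R5p:
  assumes a: "arr p" "arr s" "arr h" "arr k" "dom s = dom p" "cod p = dom h" "cod h = dom k" "cod s = cod k"
  shows "pr p s \<cdot> R (h \<cdot> k) = pr p (pr (p \<cdot> h) s \<cdot> R k) \<cdot> R h"
proof -
  let ?X = "dom h" and ?Z = "cod k"
  let ?V = "pr (p \<cdot> h) s \<cdot> R k"
  have "pr p s \<cdot> R (h \<cdot> k) = pr p s \<cdot> pr (p0 ?X ?Z) (pr (p0 ?X ?Z \<cdot> h) (p1 ?X ?Z) \<cdot> R k) \<cdot> R h"
    using a by (simp add: RD5)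
  also have "\<dots> = pr (pr p s \<cdot> p0 ?X ?Z) (pr p s \<cdot> pr (p0 ?X ?Z \<cdot> h) (p1 ?X ?Z) \<cdot> R k) \<cdot> R h"
    using a by (simp add: pr_prec tys)
  also have "\<dots> = pr (rs s \<cdot> p) (pr (rs s \<cdot> p \<cdot> h) (rs p \<cdot> s) \<cdot> R k) \<cdot> R h"
    using a by (simp add: pr_prec pr_pre pair_p0 pair_p1 pair_p0c tys)
  also have "pr (rs s \<cdot> p \<cdot> h) (rs p \<cdot> s) = rs s \<cdot> rs p \<cdot> pr (p \<cdot> h) s"
    using a by (simp add: pr_rs_l pr_rs_r rsimp)
  also have "pr (rs s \<cdot> p) ((rs s \<cdot> rs p \<cdot> pr (p \<cdot> h) s) \<cdot> R k) = rs s \<cdot> rs p \<cdot> pr p ?V"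
    using a by (simp add: pr_rs_l pr_rs_r tys rsimp)
  also have "(rs s \<cdot> rs p \<cdot> pr p ?V) \<cdot> R h = rs s \<cdot> rs p \<cdot> (pr p ?V \<cdot> R h)"
    using a by (simp add: tys assoc)
  also have "\<dots> = pr p ?V \<cdot> R h"
  proof -
    have l1: "le (pr p ?V \<cdot> R h) p" by (insert a, (rule le_intros | simp add: tys)+)
    have l2: "le (pr p ?V \<cdot> R h) s" by (insert a, (rule le_intros | simp add: tys)+)
    have "rs p \<cdot> (pr p ?V \<cdot> R h) = pr p ?V \<cdot> R h" by (rule le_absorb[OF _ _ _ l1]) (use a in \<open>simp_all add: tys\<close>)
    moreover have "rs s \<cdot> (pr p ?V \<cdot> R h) = pr p ?V \<cdot> R h" by (rule le_absorb[OF _ _ _ l2]) (use a in \<open>simp_all add: tys\<close>)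
    ultimately show ?thesis by simp
  qed
  finally show ?thesis .
qed


lemma idp0: "Id (Pr A B) \<cdot> p0 A B = p0 A B" by (rule idl) (simp_all add: tys)
lemma idp1: "Id (Pr A B) \<cdot> p1 A B = p1 A B" by (rule idl) (simp_all add: tys)
lemma pr_p01: "pr (p0 A B) (p1 A B) = Id (Pr A B)"
proof -
  have "Id (Pr A B) = pr (p0 A B) (p1 A B)"
    by (rule pair_uniq[of "p0 A B" "p1 A B" A B]) (simp_all add: tys p0_tot p1_tot idp0 idp1)
  then show ?thesis by simp
qed

lemma R_Id: "R (Id A) = p1 A A"
proof -
  have "R (rs (Id A)) = tn (rs (Id A)) (Id A) \<cdot> p1 A A" using RD9[of "Id A"] by (simp add: tys)
  then show ?thesis by (simp add: rs_Id tn_def' tys idr pr_p01 idl)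
qed

lemma tn_pairc: "arr a \<Longrightarrow> arr b \<Longrightarrow> dom a = dom b \<Longrightarrow> arr h \<Longrightarrow> arr k \<Longrightarrow> cod a = dom h \<Longrightarrow> cod b = dom k \<Longrightarrow>
   rs h = Id (dom h) \<Longrightarrow> rs k = Id (dom k) \<Longrightarrow> arr x \<Longrightarrow> dom x = Pr (cod h) (cod k) \<Longrightarrow>
   pr a b \<cdot> tn h k \<cdot> x = pr (a \<cdot> h) (b \<cdot> k) \<cdot> x"
  using tn_pair[of a b h k] by (simp add: assoc[symmetric] tys)

lemma iota0p: assumes "arr p" "cod p = X" shows "p \<cdot> iota0 C X Y = pr p (z (dom p) Y)"
proof -
  have "p \<cdot> iota0 C X Y = pr (p \<cdot> Id X) (p \<cdot> z X Y)" unfolding iota0_def using assms by (simp add: pr_pre tys)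
  also have "\<dots> = pr p (rs p \<cdot> z (dom p) Y)" using assms by (simp add: idr lzero)
  also have "\<dots> = rs p \<cdot> pr p (z (dom p) Y)" using assms by (simp add: pr_rs_r tys)
  also have "\<dots> = pr (rs p \<cdot> p) (z (dom p) Y)" using assms by (simp add: pr_rs_l tys)
  also have "\<dots> = pr p (z (dom p) Y)" using assms by (simp add: rs1)
  finally show ?thesis .
qed

lemma R4p: assumes "arr q" "arr w" "arr u" "arr v" "dom w = dom q" "cod q = dom u" "dom u = dom v" "cod w = Pr (cod u) (cod v)"
  shows "pr q w \<cdot> R (pr u v) = pr q (w \<cdot> p0 (cod u) (cod v)) \<cdot> R u \<oplus> pr q (w \<cdot> p1 (cod u) (cod v)) \<cdot> R v"
  using assms by (simp add: RD4 ldist tys tn_pairc p0_tot p1_tot rs_Id idr)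

lemma Rp0p: assumes "arr q" "arr w" "dom w = dom q" "cod q = Pr A B" "cod w = A"
  shows "pr q w \<cdot> R (p0 A B) = rs q \<cdot> pr w (z (dom q) B)"
proof -
  have "pr q w \<cdot> R (p0 A B) = (pr q w \<cdot> p1 (Pr A B) A) \<cdot> iota0 C A B"
    using assms by (simp add: RD3a assoc tys)
  also have "\<dots> = rs q \<cdot> w \<cdot> iota0 C A B" using assms by (simp add: pair_p1 assoc tys)
  also have "\<dots> = rs q \<cdot> pr w (z (dom q) B)" using assms by (simp add: iota0p)
  finally show ?thesis .
qed

lemma iota1p: assumes "arr p" "cod p = Y" shows "p \<cdot> iota1 C X Y = pr (z (dom p) X) p"
proof -
  have "p \<cdot> iota1 C X Y = pr (p \<cdot> z Y X) (p \<cdot> Id Y)" unfolding iota1_def using assms by (simp add: pr_pre tys)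
  also have "\<dots> = pr (rs p \<cdot> z (dom p) X) p" using assms by (simp add: idr lzero)
  also have "\<dots> = rs p \<cdot> pr (z (dom p) X) p" using assms by (simp add: pr_rs_l tys)
  also have "\<dots> = pr (z (dom p) X) (rs p \<cdot> p)" using assms by (simp add: pr_rs_r tys)
  also have "\<dots> = pr (z (dom p) X) p" using assms by (simp add: rs1)
  finally show ?thesis .
qed

lemma Rp1p: assumes "arr q" "arr w" "dom w = dom q" "cod q = Pr A B" "cod w = B"
  shows "pr q w \<cdot> R (p1 A B) = rs q \<cdot> pr (z (dom q) A) w"
proof -
  have "pr q w \<cdot> R (p1 A B) = (pr q w \<cdot> p1 (Pr A B) B) \<cdot> iota1 C A B"
    using assms by (simp add: RD3b assoc tys)
  also have "\<dots> = rs q \<cdot> w \<cdot> iota1 C A B" using assms by (simp add: pair_p1 assoc tys)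
  also have "\<dots> = rs q \<cdot> pr (z (dom q) A) w" using assms by (simp add: iota1p)
  finally show ?thesis .
qed

lemma RIdp: assumes "arr q" "arr w" "dom w = dom q" "cod q = A" "cod w = A"
  shows "pr q w \<cdot> R (Id A) = rs q \<cdot> w"
  using assms by (simp add: R_Id pair_p1)

lemma rsR: assumes "arr x" "arr y" "arr h" "dom y = dom x" "cod x = dom h" "cod y = cod h"
  shows "rs (pr x y \<cdot> R h) = rs (x \<cdot> h) \<cdot> rs y"
proof -
  have "rs (pr x y \<cdot> R h) = rs (pr x y \<cdot> rs (R h))" using assms by (simp add: rs_post tys)
  also have "\<dots> = rs (pr x y \<cdot> tn (rs h) (Id (cod h)))" using assms by (simp add: RD8)
  also have "\<dots> = rs (pr (rs y \<cdot> x \<cdot> rs h) (rs x \<cdot> y \<cdot> Id (cod h)))" using assms by (simp add: tn_pair_gen tys)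
  also have "\<dots> = rs (x \<cdot> h) \<cdot> rs y" using assms by (simp add: rsimp2 idr rs_post)
  finally show ?thesis .
qed


abbreviation D where "D \<equiv> Dop C"

lemma Dop_unf: "arr g \<Longrightarrow> D g = tn (iota0 C (dom g) (cod g)) (Id (dom g)) \<cdot> R (R g) \<cdot> p1 (dom g) (cod g)"
  unfolding Dop_def dagger_def by (simp add: assoc tys)

lemma D_ty[tys]: "arr g \<Longrightarrow> arr (D g)" and dom_D[tys]: "arr g \<Longrightarrow> dom (D g) = Pr (dom g) (dom g)"
  and cod_D[tys]: "arr g \<Longrightarrow> cod (D g) = cod g"
  by (simp_all add: Dop_unf tys)

lemma iota0_tot: "rs (iota0 C A B) = Id A"
  unfolding iota0_def by (simp add: rs_pair tys rs_Id rs_z idl)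

lemma Dp: assumes "arr g" "arr p" "arr v" "dom v = dom p" "cod p = dom g" "cod v = dom g"
  shows "pr p v \<cdot> D g = pr (pr p (z (dom p) (cod g))) v \<cdot> R (R g) \<cdot> p1 (dom g) (cod g)"
  using assms by (simp add: Dop_unf tn_pairc iota0_tot rs_Id tys iota0p idr)

lemma rsD: assumes "arr g" "arr p" "arr v" "dom v = dom p" "cod p = dom g" "cod v = dom g"
  shows "rs (pr p v \<cdot> D g) = rs (p \<cdot> g) \<cdot> rs v"
proof -
  have "rs (pr p v \<cdot> D g) = rs (pr (pr p (z (dom p) (cod g))) v \<cdot> R (R g))"
    using assms by (simp add: Dp assoc[symmetric] tys p1_tot')
  also have "\<dots> = rs (pr p (z (dom p) (cod g)) \<cdot> R g) \<cdot> rs v" using assms by (simp add: rsR tys)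
  also have "\<dots> = rs (p \<cdot> g) \<cdot> rs v" using assms by (simp add: rsR tys rs_z idr)
  finally show ?thesis .
qed

lemma le_rhs: "arr x \<Longrightarrow> arr y \<Longrightarrow> arr a \<Longrightarrow> arr b \<Longrightarrow> dom x = dom y \<Longrightarrow> dom a = dom y \<Longrightarrow> dom b = dom y \<Longrightarrow>
   rs y = rs a \<cdot> rs b \<Longrightarrow> le x a \<Longrightarrow> le x b \<Longrightarrow> le x y"
  unfolding le_def
proof -
  assume a: "arr x" "arr y" "arr a" "arr b" "dom x = dom y" "dom a = dom y" "dom b = dom y"
    "rs y = rs a \<cdot> rs b" "rs x \<cdot> rs a = rs x" "rs x \<cdot> rs b = rs x"
  have "rs x \<cdot> (rs a \<cdot> rs b) = (rs x \<cdot> rs a) \<cdot> rs b" by (rule assoc[symmetric]) (use a in \<open>simp_all add: tys\<close>)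
  then show "rs x \<cdot> rs y = rs x" using a by simp
qed

lemma le_lhs: "arr x \<Longrightarrow> arr y \<Longrightarrow> arr a \<Longrightarrow> dom x = dom y \<Longrightarrow> dom a = dom y \<Longrightarrow>
   le x a \<Longrightarrow> le a y \<Longrightarrow> le x y"
  by (rule le_trans[of x a y]) simp_all

lemma le_tot: "arr x \<Longrightarrow> arr y \<Longrightarrow> dom x = dom y \<Longrightarrow> rs y = Id (dom y) \<Longrightarrow> le x y"
  unfolding le_def by (simp add: idr tys)

lemma le_R_1: assumes "arr x" "arr w" "arr h" "dom w = dom x" "cod x = dom h" "cod w = cod h"
  "arr y" "dom y = dom x" "le (x \<cdot> h) y" shows "le (pr x w \<cdot> R h) y"
  by (rule le_lhs[of _ _ "x \<cdot> h"]) (use assms in \<open>simp_all add: tys le_def rsR rsimp2\<close>)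
lemma le_R_2: assumes "arr x" "arr w" "arr h" "dom w = dom x" "cod x = dom h" "cod w = cod h"
  "arr y" "dom y = dom x" "le w y" shows "le (pr x w \<cdot> R h) y"
  by (rule le_lhs[of _ _ "w"]) (use assms in \<open>simp_all add: tys le_def rsR rsimp2\<close>)
lemma le_R_r: assumes "arr x" "arr w" "arr h" "dom w = dom x" "cod x = dom h" "cod w = cod h"
  "arr y" "dom y = dom x" "le y (x \<cdot> h)" "le y w" shows "le y (pr x w \<cdot> R h)"
  by (rule le_rhs[of _ _ "x \<cdot> h" w]) (use assms in \<open>simp_all add: tys rsR\<close>)

lemma le_D_1: assumes "arr g" "arr p" "arr v" "dom v = dom p" "cod p = dom g" "cod v = dom g"
  "arr y" "dom y = dom p" "le (p \<cdot> g) y" shows "le (pr p v \<cdot> D g) y"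
  by (rule le_lhs[of _ _ "p \<cdot> g"]) (use assms in \<open>simp_all add: tys le_def rsD rsimp2\<close>)
lemma le_D_2: assumes "arr g" "arr p" "arr v" "dom v = dom p" "cod p = dom g" "cod v = dom g"
  "arr y" "dom y = dom p" "le v y" shows "le (pr p v \<cdot> D g) y"
  by (rule le_lhs[of _ _ "v"]) (use assms in \<open>simp_all add: tys le_def rsD rsimp2\<close>)
lemma le_D_r: assumes "arr g" "arr p" "arr v" "dom v = dom p" "cod p = dom g" "cod v = dom g"
  "arr y" "dom y = dom p" "le y (p \<cdot> g)" "le y v" shows "le y (pr p v \<cdot> D g)"
  by (rule le_rhs[of _ _ "p \<cdot> g" v]) (use assms in \<open>simp_all add: tys rsD\<close>)

lemma le_pair_r: "arr a \<Longrightarrow> arr b \<Longrightarrow> dom a = dom b \<Longrightarrow> arr y \<Longrightarrow> dom y = dom a \<Longrightarrow> le y a \<Longrightarrow> le y b \<Longrightarrow> le y (pr a b)"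
  by (rule le_rhs[of _ _ a b]) (simp_all add: tys rs_pair)
lemma le_rs_r: "arr e \<Longrightarrow> arr f \<Longrightarrow> dom e = dom f \<Longrightarrow> arr y \<Longrightarrow> dom y = dom f \<Longrightarrow> le y e \<Longrightarrow> le y f \<Longrightarrow> le y (rs e \<cdot> f)"
  by (rule le_rhs[of _ _ e f]) (simp_all add: tys rs3)
lemma le_add_r: "arr f \<Longrightarrow> arr g \<Longrightarrow> dom f = dom g \<Longrightarrow> cod f = cod g \<Longrightarrow> arr y \<Longrightarrow> dom y = dom f \<Longrightarrow> le y f \<Longrightarrow> le y g \<Longrightarrow> le y (f \<oplus> g)"
  by (rule le_rhs[of _ _ f g]) (simp_all add: tys rs_add)
lemma le_cmp_tot: "arr a \<Longrightarrow> arr g \<Longrightarrow> cod a = dom g \<Longrightarrow> rs g = Id (dom g) \<Longrightarrow> arr y \<Longrightarrow> dom y = dom a \<Longrightarrow> le y a \<Longrightarrow> le y (a \<cdot> g)"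
  unfolding le_def by (simp add: rs_tot)
lemma le_z: "arr y \<Longrightarrow> dom y = A \<Longrightarrow> le y (z A B)"
  by (rule le_tot) (simp_all add: tys rs_z)
lemma le_p0: "arr y \<Longrightarrow> dom y = Pr A B \<Longrightarrow> le y (p0 A B)"
  by (rule le_tot) (simp_all add: tys p0_tot)
lemma le_p1: "arr y \<Longrightarrow> dom y = Pr A B \<Longrightarrow> le y (p1 A B)"
  by (rule le_tot) (simp_all add: tys p1_tot)
lemma le_Id: "arr y \<Longrightarrow> dom y = A \<Longrightarrow> le y (Id A)"
  by (rule le_tot) (simp_all add: tys rs_Id)

lemma le_cmp_mono: assumes "arr a" "arr b" "arr c" "cod a = dom b" "dom c = dom b" "le b c" shows "le (a \<cdot> b) (a \<cdot> c)"
proof -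
  have bc: "rs b = rs c \<cdot> rs b" using assms rs2[of b c] by (simp add: le_def)
  have "rs (a \<cdot> b) = rs (a \<cdot> rs b)" using assms by (simp add: rs_post)
  also have "\<dots> = rs (a \<cdot> (rs c \<cdot> rs b))" using bc by simp
  also have "\<dots> = rs ((a \<cdot> rs c) \<cdot> rs b)" using assms by (simp add: assoc tys)
  finally have 1: "rs (a \<cdot> b) = rs ((a \<cdot> rs c) \<cdot> rs b)" .
  have 2: "rs (a \<cdot> c) = rs (a \<cdot> rs c)" using assms by (simp add: rs_post)
  have "le ((a \<cdot> rs c) \<cdot> rs b) (a \<cdot> rs c)" by (rule le_cmp) (use assms in \<open>simp_all add: tys\<close>)
  then show ?thesis unfolding le_def 1 2 .
qed

lemmas le_all = le_refl le_z le_p0 le_p1 le_Id le_pair_r le_rs_r le_add_r le_R_r le_D_r le_cmp_mono le_cmp_tot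
  le_cmpI le_pairI1 le_pairI2 le_rsI le_add1 le_add2 le_R_1 le_R_2 le_D_1 le_D_2


lemma zl: assumes "arr a" "arr M" "dom a = dom M" "le M a"
  shows "rs a \<cdot> z (dom M) (cod M) \<oplus> M = M"
proof -
  let ?X = "rs a \<cdot> z (dom M) (cod M) \<oplus> M"
  have rX: "rs ?X = rs M" using assms rs2[of M a] by (simp add: rs_add tys rs3 rs_z idr le_def)
  have "?X = rs ?X \<cdot> ?X" using assms by (simp add: rs1 tys)
  also have "\<dots> = rs M \<cdot> (rs a \<cdot> z (dom M) (cod M)) \<oplus> rs M \<cdot> M" using assms rX by (simp add: ldist tys)
  also have "rs M \<cdot> (rs a \<cdot> z (dom M) (cod M)) = rs M \<cdot> z (dom M) (cod M)"
    using assms by (simp add: assoc[symmetric] tys le_def)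
  also have "rs M \<cdot> z (dom M) (cod M) \<oplus> rs M \<cdot> M = rs M \<cdot> (z (dom M) (cod M) \<oplus> M)"
    using assms by (simp add: ldist tys)
  also have "z (dom M) (cod M) \<oplus> M = M" using assms add_comm[of M "z (dom M) (cod M)"] by (simp add: tys add_z)
  finally show ?thesis using assms by (simp add: rs1)
qed

lemma zl2: assumes "arr a" "arr b" "arr M" "dom a = dom M" "dom b = dom M" "le M a" "le M b"
  shows "rs a \<cdot> rs b \<cdot> z (dom M) (cod M) \<oplus> M = M"
proof -
  have "le M (rs a \<cdot> b)" by (rule le_rs_r) (use assms in simp_all)
  hence "rs (rs a \<cdot> b) \<cdot> z (dom M) (cod M) \<oplus> M = M" by (rule zl[rotated 3]) (use assms in \<open>simp_all add: tys\<close>)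
  thus ?thesis using assms by (simp add: rs3 assoc tys)
qed

lemma le_cmp_tot2: "arr a \<Longrightarrow> arr b \<Longrightarrow> arr g \<Longrightarrow> cod a = dom b \<Longrightarrow> cod b = dom g \<Longrightarrow> rs g = Id (dom g) \<Longrightarrow> arr y \<Longrightarrow> dom y = dom a \<Longrightarrow> le y (a \<cdot> b) \<Longrightarrow> le y (a \<cdot> b \<cdot> g)"
  using le_cmp_tot[of "a \<cdot> b" g y] by (simp add: assoc tys)

lemma le_cp0: "arr a \<Longrightarrow> cod a = Pr A B \<Longrightarrow> arr y \<Longrightarrow> dom y = dom a \<Longrightarrow> le y a \<Longrightarrow> le y (a \<cdot> p0 A B)"
  by (rule le_cmp_tot) (simp_all add: tys p0_tot)
lemma le_cp1: "arr a \<Longrightarrow> cod a = Pr A B \<Longrightarrow> arr y \<Longrightarrow> dom y = dom a \<Longrightarrow> le y a \<Longrightarrow> le y (a \<cdot> p1 A B)"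
  by (rule le_cmp_tot) (simp_all add: tys p1_tot)
lemma le_cp0b: "arr a \<Longrightarrow> arr b \<Longrightarrow> cod a = dom b \<Longrightarrow> cod b = Pr A B \<Longrightarrow> arr y \<Longrightarrow> dom y = dom a \<Longrightarrow> le y (a \<cdot> b) \<Longrightarrow> le y (a \<cdot> b \<cdot> p0 A B)"
  by (rule le_cmp_tot2) (simp_all add: tys p0_tot)
lemma le_cp1b: "arr a \<Longrightarrow> arr b \<Longrightarrow> cod a = dom b \<Longrightarrow> cod b = Pr A B \<Longrightarrow> arr y \<Longrightarrow> dom y = dom a \<Longrightarrow> le y (a \<cdot> b) \<Longrightarrow> le y (a \<cdot> b \<cdot> p1 A B)"
  by (rule le_cmp_tot2) (simp_all add: tys p1_tot)

lemmas le_right = le_z le_p0 le_p1 le_Id le_pair_r le_rs_r le_add_r le_R_r le_D_r le_cp0 le_cp1 le_cp0b le_cp1b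

lemmas le_all2 = le_refl le_z le_p0 le_p1 le_Id le_pair_r le_rs_r le_add_r le_R_r le_D_r le_cp0 le_cp1 le_cp0b le_cp1b le_cmp_mono
  le_R_1 le_R_2 le_D_1 le_D_2 le_cmpI le_pairI1 le_pairI2 le_rsI le_add1 le_add2

lemma Dchain:
  assumes u: "arr u" and G: "arr G" "cod u = dom G" and p: "arr p" "cod p = dom u" and v: "arr v" "dom v = dom p" "cod v = dom u"
  shows "pr p v \<cdot> D (u \<cdot> G) = pr (p \<cdot> u) (pr p v \<cdot> D u) \<cdot> D G"
proof -
  let ?X = "dom u" and ?Y = "cod u" and ?Z = "cod G" and ?T = "dom p"
  let ?q = "pr p (z ?T ?Z)" and ?q' = "pr p (z ?T ?Y)"
  let ?W = "pr (p0 ?X ?Z \<cdot> u) (p1 ?X ?Z) \<cdot> R G"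
  let ?m = "pr (p0 ?X ?Z) ?W"
  let ?e = "rs (p \<cdot> u \<cdot> G)"
  let ?S = "pr ?q' v \<cdot> R (R u)"
  let ?t = "?e \<cdot> ?S"
  let ?M = "pr (p \<cdot> u) (pr p v \<cdot> D u) \<cdot> D G"
  note a = u G p v
  have "pr p v \<cdot> D (u \<cdot> G) = pr ?q v \<cdot> R (R (u \<cdot> G)) \<cdot> p1 ?X ?Z"
    using a by (simp add: Dp tys)
  also have "R (u \<cdot> G) = ?m \<cdot> R u" using a by (simp add: RD5)
  also have "pr ?q v \<cdot> R (?m \<cdot> R u) \<cdot> p1 ?X ?Z = pr ?q (pr (?q \<cdot> ?m) v \<cdot> R (R u)) \<cdot> R ?m \<cdot> p1 ?X ?Z"
    using a by (simp add: R5p[symmetric] assoc[symmetric] tys)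
  also have "?q \<cdot> ?m = ?e \<cdot> ?q'"
  proof -
    have "?q \<cdot> ?m = pr (?q \<cdot> p0 ?X ?Z) (?q \<cdot> ?W)" using a by (simp add: pr_pre tys)
    also have "?q \<cdot> p0 ?X ?Z = p" using a by (simp add: pair_p0 tys rs_z idl)
    also have "?q \<cdot> ?W = pr (p \<cdot> u) (rs p \<cdot> z ?T ?Z) \<cdot> R G"
      using a by (simp add: pr_prec pair_p0c pair_p1 tys rs_z idl)
    also have "\<dots> = rs p \<cdot> pr (p \<cdot> u) (z ?T ?Z) \<cdot> R G"
      using a by (simp add: pr_rs_r assoc tys)
    also have "pr (p \<cdot> u) (z ?T ?Z) \<cdot> R G = ?e \<cdot> z ?T ?Y"
      using a RD2z[of "p \<cdot> u" G] by (simp add: tys assoc)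
    also have "rs p \<cdot> ?e \<cdot> z ?T ?Y = ?e \<cdot> z ?T ?Y"
      using a by (simp add: rs_le_cmpc tys)
    also have "pr p (?e \<cdot> z ?T ?Y) = ?e \<cdot> ?q'" using a by (simp add: pr_rs_r tys)
    finally show ?thesis .
  qed
  also have "pr (?e \<cdot> ?q') v \<cdot> R (R u) = ?t"
    using a by (simp add: pr_rs_l tys assoc)
  finally have L1: "pr p v \<cdot> D (u \<cdot> G) = pr ?q ?t \<cdot> R ?m \<cdot> p1 ?X ?Z" .
  let ?t1 = "?t \<cdot> p1 ?X ?Y"
  let ?n = "pr (p0 ?X ?Z \<cdot> u) (p1 ?X ?Z)"
  let ?q2 = "pr (p \<cdot> u) (z ?T ?Z)"
  let ?o = "pr ?q2 ?t1 \<cdot> R (R G)"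
  let ?Y1 = "pr p (?o \<cdot> p0 ?Y ?Z) \<cdot> R u"
  have tyS: "arr ?S" "dom ?S = ?T" "cod ?S = Pr ?X ?Y" using a by (simp_all add: tys)
  have tyt: "arr ?t" "dom ?t = ?T" "cod ?t = Pr ?X ?Y" using a by (simp_all add: tys)
  have "pr ?q ?t \<cdot> R ?m = pr ?q (?t \<cdot> p0 ?X ?Y) \<cdot> R (p0 ?X ?Z) \<oplus> pr ?q ?t1 \<cdot> R ?W"
    using a tyt R4p[of ?q ?t "p0 ?X ?Z" ?W] by (simp add: tys)
  hence L2: "pr p v \<cdot> D (u \<cdot> G) = (pr ?q (?t \<cdot> p0 ?X ?Y) \<cdot> R (p0 ?X ?Z) \<oplus> pr ?q ?t1 \<cdot> R ?W) \<cdot> p1 ?X ?Z"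
    using L1 a tyt by (simp add: assoc[symmetric] tys)
  have A: "(pr ?q (?t \<cdot> p0 ?X ?Y) \<cdot> R (p0 ?X ?Z)) \<cdot> p1 ?X ?Z = rs p \<cdot> rs ?t \<cdot> z ?T ?Z"
    using a tyt by (simp add: Rp0p tys pair_p1c pair_p1 assoc p0_tot' p0_tot2 rs_pair rs_z idr rs3)
  have qn: "?q \<cdot> ?n = ?q2"
  proof -
    have "?q \<cdot> ?n = pr (p \<cdot> u) (rs p \<cdot> z ?T ?Z)" using a by (simp add: pr_pre pair_p0c pair_p1 tys rs_z idl)
    also have "\<dots> = rs p \<cdot> ?q2" using a by (simp add: pr_rs_r tys)
    also have "\<dots> = ?q2" by (rule le_absorb) (insert a, (rule le_all | simp add: tys assoc)+)
    finally show ?thesis .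
  qed
  have B: "pr ?q ?t1 \<cdot> R ?W = pr ?q (pr ?q2 ?t1 \<cdot> R (R G)) \<cdot> R ?n"
    using a tyt R5p[of ?q ?t1 ?n "R G"] qn by (simp add: tys)
  have B': "pr ?q ?o \<cdot> R ?n = pr ?q (?o \<cdot> p0 ?Y ?Z) \<cdot> R (p0 ?X ?Z \<cdot> u) \<oplus> pr ?q (?o \<cdot> p1 ?Y ?Z) \<cdot> R (p1 ?X ?Z)"
    using a tyt R4p[of ?q ?o "p0 ?X ?Z \<cdot> u" "p1 ?X ?Z"] by (simp add: tys)
  have B1: "(pr ?q (?o \<cdot> p0 ?Y ?Z) \<cdot> R (p0 ?X ?Z \<cdot> u)) \<cdot> p1 ?X ?Z = rs p \<cdot> rs ?Y1 \<cdot> z ?T ?Z"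
  proof -
    have "pr ?q (?o \<cdot> p0 ?Y ?Z) \<cdot> R (p0 ?X ?Z \<cdot> u) = pr ?q ?Y1 \<cdot> R (p0 ?X ?Z)"
      using a tyt R5p[of ?q "?o \<cdot> p0 ?Y ?Z" "p0 ?X ?Z" u] by (simp add: tys pair_p0 rs_z idl)
    also have "\<dots> = rs p \<cdot> pr ?Y1 (z ?T ?Z)" using a tyt by (simp add: Rp0p tys rs_pair rs_z idr)
    finally have "(pr ?q (?o \<cdot> p0 ?Y ?Z) \<cdot> R (p0 ?X ?Z \<cdot> u)) \<cdot> p1 ?X ?Z = (rs p \<cdot> pr ?Y1 (z ?T ?Z)) \<cdot> p1 ?X ?Z" by simp
    also have "\<dots> = rs p \<cdot> (pr ?Y1 (z ?T ?Z) \<cdot> p1 ?X ?Z)" using a tyt by (simp add: assoc tys)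
    also have "pr ?Y1 (z ?T ?Z) \<cdot> p1 ?X ?Z = rs ?Y1 \<cdot> z ?T ?Z" by (rule pair_p1) (use a tyt in \<open>simp_all add: tys\<close>)
    finally show ?thesis .
  qed
  have B2: "(pr ?q (?o \<cdot> p1 ?Y ?Z) \<cdot> R (p1 ?X ?Z)) \<cdot> p1 ?X ?Z = rs p \<cdot> ?o \<cdot> p1 ?Y ?Z"
  proof -
    have "pr ?q (?o \<cdot> p1 ?Y ?Z) \<cdot> R (p1 ?X ?Z) = rs p \<cdot> pr (z ?T ?X) (?o \<cdot> p1 ?Y ?Z)"
      using a tyt by (simp add: Rp1p tys rs_pair rs_z idr)
    hence "(pr ?q (?o \<cdot> p1 ?Y ?Z) \<cdot> R (p1 ?X ?Z)) \<cdot> p1 ?X ?Z = (rs p \<cdot> pr (z ?T ?X) (?o \<cdot> p1 ?Y ?Z)) \<cdot> p1 ?X ?Z" by simp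
    also have "\<dots> = rs p \<cdot> (pr (z ?T ?X) (?o \<cdot> p1 ?Y ?Z) \<cdot> p1 ?X ?Z)" using a tyt by (simp add: assoc tys)
    also have "pr (z ?T ?X) (?o \<cdot> p1 ?Y ?Z) \<cdot> p1 ?X ?Z = rs (z ?T ?X) \<cdot> (?o \<cdot> p1 ?Y ?Z)" by (rule pair_p1) (use a tyt in \<open>simp_all add: tys\<close>)
    also have "rs (z ?T ?X) \<cdot> (?o \<cdot> p1 ?Y ?Z) = ?o \<cdot> p1 ?Y ?Z" using a tyt by (simp add: rs_z idl tys)
    finally show ?thesis using a tyt by (simp add: assoc tys)
  qed
  have oD: "?o \<cdot> p1 ?Y ?Z = pr (p \<cdot> u) ?t1 \<cdot> D G"
    using a tyt Dp[of G "p \<cdot> u" ?t1] by (simp add: tys assoc)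
  have t1D: "?t1 = ?e \<cdot> (pr p v \<cdot> D u)"
    using a Dp[of u p v] by (simp add: tys assoc)
  have eM: "pr (p \<cdot> u) (?e \<cdot> (pr p v \<cdot> D u)) \<cdot> D G = ?e \<cdot> ?M"
    using a by (simp add: pr_rs_r tys assoc)
  have LHS: "pr p v \<cdot> D (u \<cdot> G) = rs p \<cdot> rs ?t \<cdot> z ?T ?Z \<oplus> (rs p \<cdot> rs ?Y1 \<cdot> z ?T ?Z \<oplus> rs p \<cdot> ?e \<cdot> ?M)"
  proof -
    have "pr p v \<cdot> D (u \<cdot> G) = (pr ?q (?t \<cdot> p0 ?X ?Y) \<cdot> R (p0 ?X ?Z)) \<cdot> p1 ?X ?Z \<oplus> (pr ?q ?t1 \<cdot> R ?W) \<cdot> p1 ?X ?Z"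
      using L2 a tyt by (simp add: rdist1 tys)
    also have "(pr ?q ?t1 \<cdot> R ?W) \<cdot> p1 ?X ?Z = (pr ?q (?o \<cdot> p0 ?Y ?Z) \<cdot> R (p0 ?X ?Z \<cdot> u)) \<cdot> p1 ?X ?Z \<oplus> (pr ?q (?o \<cdot> p1 ?Y ?Z) \<cdot> R (p1 ?X ?Z)) \<cdot> p1 ?X ?Z"
      using B B' a tyt by (simp add: rdist1 tys)
    finally show ?thesis using A B1 B2 oD t1D eM by simp
  qed
  have tyM: "arr ?M" "dom ?M = ?T" "cod ?M = ?Z" using a by (simp_all add: tys)
  have lM1: "le ?M (p \<cdot> u \<cdot> G)"
    by (rule le_D_1) (use a in \<open>simp_all add: tys assoc le_refl\<close>)
  have lM2: "le ?M v"
    by (rule le_D_2, use a in \<open>simp_all add: tys\<close>, rule le_D_2, use a in \<open>simp_all add: tys le_refl\<close>)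
  have lM3: "le ?M (p \<cdot> u)"
  proof (rule le_trans[OF _ _ _ _ _ lM1])
    show "le (p \<cdot> u \<cdot> G) (p \<cdot> u)"
      by (rule le_cmp_mono) (use a in \<open>simp_all add: tys le_cmp\<close>)
  qed (use a in \<open>simp_all add: tys\<close>)
  have lM4: "le ?M p"
    by (rule le_trans[OF _ _ _ _ _ lM3]) (use a in \<open>simp_all add: tys le_cmp\<close>)
  note lMs = lM1 lM2 lM3 lM4
  have leMp: "le ?M p" by (rule lM4)
  have leMe: "le ?M (p \<cdot> u \<cdot> G)" by (rule lM1)
  have lq: "le ?M (?q' \<cdot> R u)"
    by (rule le_R_r) (use a lM3 in \<open>simp_all add: tys le_z\<close>)
  have lS: "le ?M ?S"
    by (rule le_R_r) (use a lq lM2 in \<open>simp_all add: tys\<close>)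
  have leMt: "le ?M ?t"
    by (rule le_rs_r) (use a lS lM1 tyS in \<open>simp_all add: tys\<close>)
  have lt1: "le ?M ?t1"
    by (rule le_cp1) (use a leMt tyt in \<open>simp_all add: tys\<close>)
  have lq2: "le ?M (?q2 \<cdot> R G)"
    by (rule le_R_r) (use a lM1 in \<open>simp_all add: tys le_z assoc\<close>)
  have tyo: "arr ?o" "dom ?o = ?T" "cod ?o = Pr ?Y ?Z" using a tyt by (simp_all add: tys)
  have lo: "le ?M ?o"
    by (rule le_R_r) (use a lq2 lt1 tyt in \<open>simp_all add: tys\<close>)
  have lo0: "le ?M (?o \<cdot> p0 ?Y ?Z)"
    by (rule le_cp0) (use a lo tyo in \<open>simp_all add: tys\<close>)
  have tyY1: "arr ?Y1" "dom ?Y1 = ?T" "cod ?Y1 = ?X" using a tyo by (simp_all add: tys)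
  have leMY: "le ?M ?Y1"
    by (rule le_R_r) (use a lM3 lo0 tyo in \<open>simp_all add: tys\<close>)
  have eM2: "rs p \<cdot> ?e \<cdot> ?M = ?M"
  proof -
    have "?e \<cdot> ?M = ?M" by (rule le_absorb) (use a leMe in \<open>simp_all add: tys\<close>)
    moreover have "rs p \<cdot> ?M = ?M" by (rule le_absorb) (use a leMp in \<open>simp_all add: tys\<close>)
    ultimately show ?thesis by simp
  qed
  have "rs p \<cdot> rs ?Y1 \<cdot> z ?T ?Z \<oplus> ?M = ?M"
    using zl2[of p ?Y1 ?M, OF a(4) tyY1(1) tyM(1) _ _ leMp leMY] a tyM tyY1 by simp
  moreover have "rs p \<cdot> rs ?t \<cdot> z ?T ?Z \<oplus> ?M = ?M"
    using zl2[of p ?t ?M, OF a(4) tyt(1) tyM(1) _ _ leMp leMt] a tyM tyt by simp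
  ultimately show ?thesis using LHS eM2 by simp
qed



lemma zr: assumes "arr a" "arr M" "dom a = dom M" "le M a"
  shows "M \<oplus> rs a \<cdot> z (dom M) (cod M) = M"
  using zl[OF assms] add_comm[of M "rs a \<cdot> z (dom M) (cod M)"] assms by (simp add: tys)

lemma pr_add: assumes "arr a" "arr b" "arr c" "arr d" "dom b = dom a" "dom c = dom a" "dom d = dom a"
  "cod c = cod a" "cod d = cod b"
  shows "pr a b \<oplus> pr c d = pr (a \<oplus> c) (b \<oplus> d)"
proof (rule pair_uniq[of _ _ "cod a" "cod b"])
  show "(pr a b \<oplus> pr c d) \<cdot> p0 (cod a) (cod b) = rs (b \<oplus> d) \<cdot> (a \<oplus> c)"
  proof -
    have "(pr a b \<oplus> pr c d) \<cdot> p0 (cod a) (cod b) = rs b \<cdot> a \<oplus> rs d \<cdot> c"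
      using assms by (simp add: rdist0 tys pair_p0)
    also have "\<dots> = rs (rs b \<cdot> a \<oplus> rs d \<cdot> c) \<cdot> (rs b \<cdot> a \<oplus> rs d \<cdot> c)" using assms by (simp add: rs1 tys)
    also have "\<dots> = rs (b \<oplus> d) \<cdot> (rs (a \<oplus> c) \<cdot> (rs b \<cdot> a \<oplus> rs d \<cdot> c))"
      using assms by (simp add: rs_add tys rs3 rsimp2)
    also have "rs (a \<oplus> c) \<cdot> (rs b \<cdot> a \<oplus> rs d \<cdot> c) = rs c \<cdot> rs b \<cdot> a \<oplus> rs a \<cdot> rs d \<cdot> c"
      using assms by (simp add: rs_add tys ldist rsimp2)
    also have "rs (b \<oplus> d) \<cdot> (rs c \<cdot> rs b \<cdot> a \<oplus> rs a \<cdot> rs d \<cdot> c) = rs (b \<oplus> d) \<cdot> (rs c \<cdot> a \<oplus> rs a \<cdot> c)"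
      using assms by (simp add: rs_add tys ldist rsimp2)
    also have "rs c \<cdot> a \<oplus> rs a \<cdot> c = rs (a \<oplus> c) \<cdot> (a \<oplus> c)"
      using assms by (simp add: rs_add tys ldist rsimp2)
    also have "\<dots> = a \<oplus> c" using assms by (simp add: rs1 tys)
    finally show ?thesis .
  qed
  show "(pr a b \<oplus> pr c d) \<cdot> p1 (cod a) (cod b) = rs (a \<oplus> c) \<cdot> (b \<oplus> d)"
  proof -
    have "(pr a b \<oplus> pr c d) \<cdot> p1 (cod a) (cod b) = rs a \<cdot> b \<oplus> rs c \<cdot> d"
      using assms by (simp add: rdist1 tys pair_p1)
    also have "\<dots> = rs (rs a \<cdot> b \<oplus> rs c \<cdot> d) \<cdot> (rs a \<cdot> b \<oplus> rs c \<cdot> d)" using assms by (simp add: rs1 tys)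
    also have "\<dots> = rs (a \<oplus> c) \<cdot> (rs (b \<oplus> d) \<cdot> (rs a \<cdot> b \<oplus> rs c \<cdot> d))"
      using assms by (simp add: rs_add tys rs3 rsimp2)
    also have "rs (b \<oplus> d) \<cdot> (rs a \<cdot> b \<oplus> rs c \<cdot> d) = rs d \<cdot> rs a \<cdot> b \<oplus> rs b \<cdot> rs c \<cdot> d"
      using assms by (simp add: rs_add tys ldist rsimp2)
    also have "rs (a \<oplus> c) \<cdot> (rs d \<cdot> rs a \<cdot> b \<oplus> rs b \<cdot> rs c \<cdot> d) = rs (a \<oplus> c) \<cdot> (rs d \<cdot> b \<oplus> rs b \<cdot> d)"
      using assms by (simp add: rs_add tys ldist rsimp2)
    also have "rs d \<cdot> b \<oplus> rs b \<cdot> d = rs (b \<oplus> d) \<cdot> (b \<oplus> d)"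
      using assms by (simp add: rs_add tys ldist rsimp2)
    also have "\<dots> = b \<oplus> d" using assms by (simp add: rs1 tys)
    finally show ?thesis .
  qed
qed (use assms in \<open>simp_all add: tys\<close>)


lemma pr_zero: assumes "arr a" "arr b" "dom b = dom a" "cod a = A1" "cod b = B1"
  shows "pr a b \<cdot> z (Pr A1 B1) B = rs a \<cdot> rs b \<cdot> z (dom a) B"
  using assms lzero[of "pr a b" "Pr A1 B1" B] by (simp add: tys rs_pair assoc)

lemma Ri0p: assumes "arr x" "arr y" "dom y = dom x" "cod x = A" "cod y = Pr A B"
  shows "pr x y \<cdot> R (iota0 C A B) = rs x \<cdot> y \<cdot> p0 A B"
proof -
  have "pr x y \<cdot> R (iota0 C A B) = pr x (y \<cdot> p0 A B) \<cdot> R (Id A) \<oplus> pr x (y \<cdot> p1 A B) \<cdot> R (z A B)"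
    unfolding iota0_def using assms R4p[of x y "Id A" "z A B"] by (simp add: tys)
  also have "\<dots> = rs x \<cdot> y \<cdot> p0 A B \<oplus> rs (rs x \<cdot> y) \<cdot> z (dom x) A"
    using assms by (simp add: RIdp RD1z pr_zero tys p1_tot' rs3 assoc)
  also have "\<dots> = rs x \<cdot> y \<cdot> p0 A B"
    using zr[of "rs x \<cdot> y" "rs x \<cdot> y \<cdot> p0 A B"] assms
    by (simp add: tys le_def rsimp2 p0_tot')
  finally show ?thesis .
qed

lemma Ri1p: assumes "arr x" "arr y" "dom y = dom x" "cod x = B" "cod y = Pr A B"
  shows "pr x y \<cdot> R (iota1 C A B) = rs x \<cdot> y \<cdot> p1 A B"
proof -
  have "pr x y \<cdot> R (iota1 C A B) = pr x (y \<cdot> p0 A B) \<cdot> R (z B A) \<oplus> pr x (y \<cdot> p1 A B) \<cdot> R (Id B)"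
    unfolding iota1_def using assms R4p[of x y "z B A" "Id B"] by (simp add: tys)
  also have "\<dots> = rs (rs x \<cdot> y) \<cdot> z (dom x) B \<oplus> rs x \<cdot> y \<cdot> p1 A B"
    using assms by (simp add: RIdp RD1z pr_zero tys p0_tot' rs3 assoc)
  also have "\<dots> = rs x \<cdot> y \<cdot> p1 A B"
    using zl[of "rs x \<cdot> y" "rs x \<cdot> y \<cdot> p1 A B"] assms
    by (simp add: tys le_def rsimp2 p1_tot')
  finally show ?thesis .
qed

lemma Dp0: assumes "arr p" "arr v" "dom v = dom p" "cod p = Pr A B" "cod v = Pr A B"
  shows "pr p v \<cdot> D (p0 A B) = rs p \<cdot> v \<cdot> p0 A B"
proof -
  let ?T = "dom p"
  let ?q = "pr p (z ?T A)"
  have "pr p v \<cdot> D (p0 A B) = pr ?q v \<cdot> R (p1 (Pr A B) A \<cdot> iota0 C A B) \<cdot> p1 (Pr A B) A"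
    using assms by (simp add: Dp tys RD3a)
  also have "\<dots> = pr ?q (pr (?q \<cdot> p1 (Pr A B) A) v \<cdot> R (iota0 C A B)) \<cdot> R (p1 (Pr A B) A) \<cdot> p1 (Pr A B) A"
    using assms R5p[of ?q v "p1 (Pr A B) A" "iota0 C A B"] by (simp add: tys assoc[symmetric])
  also have "pr (?q \<cdot> p1 (Pr A B) A) v \<cdot> R (iota0 C A B) = rs p \<cdot> v \<cdot> p0 A B"
    using assms by (simp add: pair_p1 tys Ri0p rs3 rs_z idr)
  also have "pr ?q (rs p \<cdot> v \<cdot> p0 A B) \<cdot> R (p1 (Pr A B) A) \<cdot> p1 (Pr A B) A
     = rs p \<cdot> rs p \<cdot> v \<cdot> p0 A B"
  proof -
    let ?W = "rs p \<cdot> v \<cdot> p0 A B"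
    have tyW: "arr ?W" "dom ?W = ?T" "cod ?W = A" using assms by (simp_all add: tys)
    have "pr ?q ?W \<cdot> R (p1 (Pr A B) A) = rs p \<cdot> pr (z ?T (Pr A B)) ?W"
      using assms tyW Rp1p[of ?q ?W "Pr A B" A] by (simp add: tys rs_pair rs_z idr)
    hence "pr ?q ?W \<cdot> R (p1 (Pr A B) A) \<cdot> p1 (Pr A B) A = (rs p \<cdot> pr (z ?T (Pr A B)) ?W) \<cdot> p1 (Pr A B) A"
      using assms tyW by (simp add: assoc[symmetric] tys)
    also have "\<dots> = rs p \<cdot> (pr (z ?T (Pr A B)) ?W \<cdot> p1 (Pr A B) A)" using assms tyW by (simp add: assoc tys)
    also have "pr (z ?T (Pr A B)) ?W \<cdot> p1 (Pr A B) A = rs (z ?T (Pr A B)) \<cdot> ?W"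
      by (rule pair_p1) (use assms tyW in \<open>simp_all add: tys\<close>)
    also have "rs (z ?T (Pr A B)) \<cdot> ?W = ?W" using assms tyW by (simp add: rs_z idl)
    finally show ?thesis .
  qed
  finally show ?thesis using assms by (simp add: rsimp2)
qed

lemma Dp1: assumes "arr p" "arr v" "dom v = dom p" "cod p = Pr A B" "cod v = Pr A B"
  shows "pr p v \<cdot> D (p1 A B) = rs p \<cdot> v \<cdot> p1 A B"
proof -
  let ?T = "dom p"
  let ?q = "pr p (z ?T B)"
  have "pr p v \<cdot> D (p1 A B) = pr ?q v \<cdot> R (p1 (Pr A B) B \<cdot> iota1 C A B) \<cdot> p1 (Pr A B) B"
    using assms by (simp add: Dp tys RD3b)
  also have "\<dots> = pr ?q (pr (?q \<cdot> p1 (Pr A B) B) v \<cdot> R (iota1 C A B)) \<cdot> R (p1 (Pr A B) B) \<cdot> p1 (Pr A B) B"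
    using assms R5p[of ?q v "p1 (Pr A B) B" "iota1 C A B"] by (simp add: tys assoc[symmetric])
  also have "pr (?q \<cdot> p1 (Pr A B) B) v \<cdot> R (iota1 C A B) = rs p \<cdot> v \<cdot> p1 A B"
    using assms by (simp add: pair_p1 tys Ri1p rs3 rs_z idr)
  also have "pr ?q (rs p \<cdot> v \<cdot> p1 A B) \<cdot> R (p1 (Pr A B) B) \<cdot> p1 (Pr A B) B
     = rs p \<cdot> rs p \<cdot> v \<cdot> p1 A B"
  proof -
    let ?W = "rs p \<cdot> v \<cdot> p1 A B"
    have tyW: "arr ?W" "dom ?W = ?T" "cod ?W = B" using assms by (simp_all add: tys)
    have "pr ?q ?W \<cdot> R (p1 (Pr A B) B) = rs p \<cdot> pr (z ?T (Pr A B)) ?W"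
      using assms tyW Rp1p[of ?q ?W "Pr A B" B] by (simp add: tys rs_pair rs_z idr)
    hence "pr ?q ?W \<cdot> R (p1 (Pr A B) B) \<cdot> p1 (Pr A B) B = (rs p \<cdot> pr (z ?T (Pr A B)) ?W) \<cdot> p1 (Pr A B) B"
      using assms tyW by (simp add: assoc[symmetric] tys)
    also have "\<dots> = rs p \<cdot> (pr (z ?T (Pr A B)) ?W \<cdot> p1 (Pr A B) B)" using assms tyW by (simp add: assoc tys)
    also have "pr (z ?T (Pr A B)) ?W \<cdot> p1 (Pr A B) B = rs (z ?T (Pr A B)) \<cdot> ?W"
      by (rule pair_p1) (use assms tyW in \<open>simp_all add: tys\<close>)
    also have "rs (z ?T (Pr A B)) \<cdot> ?W = ?W" using assms tyW by (simp add: rs_z idl)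
    finally show ?thesis .
  qed
  finally show ?thesis using assms by (simp add: rsimp2)
qed

lemma Dsum: assumes "arr G" "arr G'" "dom G' = dom G" "cod G' = cod G"
  shows "D (G \<oplus> G') = D G \<oplus> D G'"
proof -
  have "D (G \<oplus> G') = tn (iota0 C (dom G) (cod G)) (Id (dom G)) \<cdot> (R (R G) \<oplus> R (R G')) \<cdot> p1 (dom G) (cod G)"
    using assms by (simp add: Dop_unf tys RD1)
  also have "(R (R G) \<oplus> R (R G')) \<cdot> p1 (dom G) (cod G) = R (R G) \<cdot> p1 (dom G) (cod G) \<oplus> R (R G') \<cdot> p1 (dom G) (cod G)"
    using assms by (simp add: rdist1 tys)
  also have "tn (iota0 C (dom G) (cod G)) (Id (dom G)) \<cdot> (R (R G) \<cdot> p1 (dom G) (cod G) \<oplus> R (R G') \<cdot> p1 (dom G) (cod G)) = D G \<oplus> D G'"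
    using assms by (simp add: ldist tys Dop_unf)
  finally show ?thesis .
qed


lemma Rtn1:
  assumes h: "arr h" "rs h = Id (dom h)" and k: "arr k" and q: "arr q" "cod q = Pr (dom h) (dom k)"
    and s: "arr s" "dom s = dom q" "cod s = Pr (cod h) (cod k)"
  shows "pr q s \<cdot> R (tn h k) \<cdot> p1 (dom h) (dom k) = pr (q \<cdot> p1 (dom h) (dom k)) (s \<cdot> p1 (cod h) (cod k)) \<cdot> R k"
proof -
  let ?H = "dom h" and ?K = "dom k" and ?H' = "cod h" and ?K' = "cod k" and ?T = "dom q"
  let ?W0 = "pr (q \<cdot> p0 ?H ?K) (s \<cdot> p0 ?H' ?K') \<cdot> R h"
  let ?W1 = "pr (q \<cdot> p1 ?H ?K) (s \<cdot> p1 ?H' ?K') \<cdot> R k"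
  note a = h k q s
  have tW0: "arr ?W0" "dom ?W0 = ?T" "cod ?W0 = ?H" using a by (simp_all add: tys)
  have tW1: "arr ?W1" "dom ?W1 = ?T" "cod ?W1 = ?K" using a by (simp_all add: tys)
  have "pr q s \<cdot> R (tn h k) = pr q (s \<cdot> p0 ?H' ?K') \<cdot> R (p0 ?H ?K \<cdot> h) \<oplus> pr q (s \<cdot> p1 ?H' ?K') \<cdot> R (p1 ?H ?K \<cdot> k)"
    unfolding tn_def' using a R4p[of q s "p0 ?H ?K \<cdot> h" "p1 ?H ?K \<cdot> k"] by (simp add: tys)
  also have "pr q (s \<cdot> p0 ?H' ?K') \<cdot> R (p0 ?H ?K \<cdot> h) = rs q \<cdot> pr ?W0 (z ?T ?K)"
    using a R5p[of q "s \<cdot> p0 ?H' ?K'" "p0 ?H ?K" h] Rp0p[of q ?W0 ?H ?K] tW0 by (simp add: tys)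
  also have "pr q (s \<cdot> p1 ?H' ?K') \<cdot> R (p1 ?H ?K \<cdot> k) = rs q \<cdot> pr (z ?T ?H) ?W1"
    using a R5p[of q "s \<cdot> p1 ?H' ?K'" "p1 ?H ?K" k] Rp1p[of q ?W1 ?H ?K] tW1 by (simp add: tys)
  finally have 1: "pr q s \<cdot> R (tn h k) = rs q \<cdot> pr ?W0 (z ?T ?K) \<oplus> rs q \<cdot> pr (z ?T ?H) ?W1" .
  have "pr q s \<cdot> R (tn h k) \<cdot> p1 ?H ?K = (pr q s \<cdot> R (tn h k)) \<cdot> p1 ?H ?K" using a by (simp add: assoc tys)
  also have "\<dots> = (rs q \<cdot> pr ?W0 (z ?T ?K)) \<cdot> p1 ?H ?K \<oplus> (rs q \<cdot> pr (z ?T ?H) ?W1) \<cdot> p1 ?H ?K"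
    unfolding 1 using a tW0 tW1 by (simp add: rdist1 tys)
  also have "(rs q \<cdot> pr ?W0 (z ?T ?K)) \<cdot> p1 ?H ?K = rs q \<cdot> (rs ?W0 \<cdot> z ?T ?K)"
  proof -
    have "(rs q \<cdot> pr ?W0 (z ?T ?K)) \<cdot> p1 ?H ?K = rs q \<cdot> (pr ?W0 (z ?T ?K) \<cdot> p1 ?H ?K)" using a tW0 by (simp add: assoc tys)
    also have "pr ?W0 (z ?T ?K) \<cdot> p1 ?H ?K = rs ?W0 \<cdot> z ?T ?K" by (rule pair_p1) (use a tW0 in \<open>simp_all add: tys\<close>)
    finally show ?thesis .
  qed
  also have "(rs q \<cdot> pr (z ?T ?H) ?W1) \<cdot> p1 ?H ?K = rs q \<cdot> ?W1"
  proof -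
    have "(rs q \<cdot> pr (z ?T ?H) ?W1) \<cdot> p1 ?H ?K = rs q \<cdot> (pr (z ?T ?H) ?W1 \<cdot> p1 ?H ?K)" using a tW1 by (simp add: assoc tys)
    also have "pr (z ?T ?H) ?W1 \<cdot> p1 ?H ?K = rs (z ?T ?H) \<cdot> ?W1" by (rule pair_p1) (use a tW1 in \<open>simp_all add: tys\<close>)
    also have "rs (z ?T ?H) \<cdot> ?W1 = ?W1" using tW1 by (simp add: rs_z idl)
    finally show ?thesis .
  qed
  also have "rs q \<cdot> (rs ?W0 \<cdot> z ?T ?K) \<oplus> rs q \<cdot> ?W1 = rs q \<cdot> ?W1"
  proof -
    have tot: "rs (p0 ?H ?K \<cdot> h) = Id (Pr ?H ?K)" using a by (simp add: rs_tot tys p0_tot)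
    have rW0: "rs ?W0 = rs q \<cdot> rs s"
      using a tot by (simp add: rsR tys rs_tot p0_tot' rs_Id)
    have lq: "le (rs q \<cdot> ?W1) q" by (rule le_rs) (use a tW1 in \<open>simp_all add: tys\<close>)
    have ls: "le (rs q \<cdot> ?W1) s"
      by (rule le_rsI, use a tW1 in \<open>simp_all add: tys\<close>, rule le_R_2, use a in \<open>simp_all add: tys le_cmp\<close>)
    have lW0: "le (rs q \<cdot> ?W1) ?W0"
      by (rule le_rhs[of _ _ q s]) (use a tW0 tW1 rW0 lq ls in \<open>simp_all add: tys\<close>)
    have tM: "arr (rs q \<cdot> ?W1)" "dom (rs q \<cdot> ?W1) = ?T" "cod (rs q \<cdot> ?W1) = ?K" using a tW1 by (simp_all add: tys)
    have "rs q \<cdot> rs ?W0 \<cdot> z (dom (rs q \<cdot> ?W1)) (cod (rs q \<cdot> ?W1)) \<oplus> rs q \<cdot> ?W1 = rs q \<cdot> ?W1"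
      by (rule zl2[OF a(4) tW0(1) tM(1) _ _ lq lW0]) (use a tW0 tM in simp_all)
    then have "rs q \<cdot> rs ?W0 \<cdot> z ?T ?K \<oplus> rs q \<cdot> ?W1 = rs q \<cdot> ?W1" unfolding tM .
    moreover have "rs q \<cdot> rs ?W0 \<cdot> z ?T ?K = rs q \<cdot> (rs ?W0 \<cdot> z ?T ?K)" by (rule refl)
    ultimately show ?thesis by simp
  qed
  also have "rs q \<cdot> ?W1 = ?W1"
  proof (rule le_absorb[OF a(4) tW1(1)])
    show "dom q = dom ?W1" using tW1 by simp
    show "le ?W1 q" by (rule le_R_1, use a in \<open>simp_all add: tys\<close>, rule le_cmpI, use a in \<open>simp_all add: tys le_cmp\<close>)
  qed
  finally show ?thesis .
qed


lemma Dpair_part: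
  assumes u: "arr u" "dom u = X" and p: "arr p" "cod p = X" and w: "arr w" "dom w = dom p" "cod w = X"
    and pj: "arr pj" "rs pj = Id (Pr U V)" "dom pj = Pr U V" "cod pj = cod u"
    and qq: "arr qq" "dom qq = dom p" "cod qq = Pr X (Pr U V)"
    and hq: "qq \<cdot> tn (Id X) pj = pr p (z (dom p) (cod u))"
  shows "pr qq w \<cdot> R (tn (Id X) pj \<cdot> R u) \<cdot> p1 X (Pr U V)
       = pr (qq \<cdot> p1 X (Pr U V)) (pr p w \<cdot> D u) \<cdot> R pj"
proof -
  let ?h = "tn (Id X) pj"
  let ?S = "pr (pr p (z (dom p) (cod u))) w \<cdot> R (R u)"
  have tS: "arr ?S" "dom ?S = dom p" "cod ?S = Pr X (cod u)" using u p w by (simp_all add: tys)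
  have th: "arr ?h" "dom ?h = Pr X (Pr U V)" "cod ?h = Pr X (cod u)" using u pj by (simp_all add: tys)
  have "pr qq w \<cdot> R (?h \<cdot> R u) = pr qq (pr (qq \<cdot> ?h) w \<cdot> R (R u)) \<cdot> R ?h"
    by (rule R5p) (use u p w qq th in \<open>simp_all add: tys\<close>)
  also have "pr (qq \<cdot> ?h) w \<cdot> R (R u) = ?S" using hq by simp
  finally have 1: "pr qq w \<cdot> R (?h \<cdot> R u) = pr qq ?S \<cdot> R ?h" .
  have "pr qq w \<cdot> R (?h \<cdot> R u) \<cdot> p1 X (Pr U V) = (pr qq w \<cdot> R (?h \<cdot> R u)) \<cdot> p1 X (Pr U V)"
    using u p w qq th by (simp add: assoc tys)
  also have "\<dots> = (pr qq ?S \<cdot> R ?h) \<cdot> p1 X (Pr U V)" unfolding 1 ..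
  also have "\<dots> = pr qq ?S \<cdot> R ?h \<cdot> p1 X (Pr U V)" using u p w qq th tS by (simp add: assoc tys)
  also have "\<dots> = pr (qq \<cdot> p1 X (Pr U V)) (?S \<cdot> p1 X (cod u)) \<cdot> R pj"
    using Rtn1[of "Id X" pj qq ?S] u pj qq tS by (simp add: tys rs_Id)
  also have "?S \<cdot> p1 X (cod u) = pr p w \<cdot> D u"
    using u p w by (simp add: Dp tys assoc)
  finally show ?thesis .
qed

lemma Dpair:
  assumes u: "arr u" and v: "arr v" "dom v = dom u" and p: "arr p" "cod p = dom u" and w: "arr w" "dom w = dom p" "cod w = dom u"
  shows "pr p w \<cdot> D (pr u v) = pr (pr p w \<cdot> D u) (pr p w \<cdot> D v)"
proof -
  let ?X = "dom u" and ?U = "cod u" and ?V = "cod v" and ?T = "dom p"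
  let ?q = "pr p (z ?T (Pr ?U ?V))"
  let ?a = "tn (Id ?X) (p0 ?U ?V) \<cdot> R u" and ?b = "tn (Id ?X) (p1 ?U ?V) \<cdot> R v"
  note a = u v p w
  have ta: "arr ?a" "dom ?a = Pr ?X (Pr ?U ?V)" "cod ?a = ?X" using a by (simp_all add: tys)
  have tb: "arr ?b" "dom ?b = Pr ?X (Pr ?U ?V)" "cod ?b = ?X" using a by (simp_all add: tys)
  have tq: "arr ?q" "dom ?q = ?T" "cod ?q = Pr ?X (Pr ?U ?V)" using a by (simp_all add: tys)
  have "pr p w \<cdot> D (pr u v) = pr ?q w \<cdot> R (R (pr u v)) \<cdot> p1 ?X (Pr ?U ?V)"
    using a by (simp add: Dp tys)
  also have "R (R (pr u v)) = R ?a \<oplus> R ?b" using a ta tb by (simp add: RD4 RD1)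
  also have "pr ?q w \<cdot> (R ?a \<oplus> R ?b) \<cdot> p1 ?X (Pr ?U ?V) = pr ?q w \<cdot> R ?a \<cdot> p1 ?X (Pr ?U ?V) \<oplus> pr ?q w \<cdot> R ?b \<cdot> p1 ?X (Pr ?U ?V)"
    using a ta tb tq by (simp add: rdist1 ldist tys)
  also have "pr ?q w \<cdot> R ?a \<cdot> p1 ?X (Pr ?U ?V) = pr (?q \<cdot> p1 ?X (Pr ?U ?V)) (pr p w \<cdot> D u) \<cdot> R (p0 ?U ?V)"
  proof (rule Dpair_part)
    show "?q \<cdot> tn (Id ?X) (p0 ?U ?V) = pr p (z (dom p) (cod u))"
      using a tq by (simp add: tn_pair tys rs_Id p0_tot idr z_p0)
  qed (use a tq in \<open>simp_all add: tys p0_tot\<close>)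
  also have "pr ?q w \<cdot> R ?b \<cdot> p1 ?X (Pr ?U ?V) = pr (?q \<cdot> p1 ?X (Pr ?U ?V)) (pr p w \<cdot> D v) \<cdot> R (p1 ?U ?V)"
  proof (rule Dpair_part[of v ?X])
    show "?q \<cdot> tn (Id ?X) (p1 ?U ?V) = pr p (z (dom p) (cod v))"
      using a tq by (simp add: tn_pair tys rs_Id p1_tot idr z_p1)
  qed (use a tq in \<open>simp_all add: tys p1_tot\<close>)
  also have "?q \<cdot> p1 ?X (Pr ?U ?V) = rs p \<cdot> z ?T (Pr ?U ?V)" using a by (simp add: pair_p1 tys)
  also have "pr (rs p \<cdot> z ?T (Pr ?U ?V)) (pr p w \<cdot> D u) \<cdot> R (p0 ?U ?V) = rs p \<cdot> pr (pr p w \<cdot> D u) (z ?T ?V)"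
    using a Rp0p[of "rs p \<cdot> z ?T (Pr ?U ?V)" "pr p w \<cdot> D u" ?U ?V] by (simp add: tys rs3 rs_z idr)
  also have "pr (rs p \<cdot> z ?T (Pr ?U ?V)) (pr p w \<cdot> D v) \<cdot> R (p1 ?U ?V) = rs p \<cdot> pr (z ?T ?U) (pr p w \<cdot> D v)"
    using a Rp1p[of "rs p \<cdot> z ?T (Pr ?U ?V)" "pr p w \<cdot> D v" ?U ?V] by (simp add: tys rs3 rs_z idr)
  also have "rs p \<cdot> pr (pr p w \<cdot> D u) (z ?T ?V) \<oplus> rs p \<cdot> pr (z ?T ?U) (pr p w \<cdot> D v)
     = rs p \<cdot> (pr (pr p w \<cdot> D u) (z ?T ?V) \<oplus> pr (z ?T ?U) (pr p w \<cdot> D v))"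
    using a by (simp add: ldist tys)
  also have "pr (pr p w \<cdot> D u) (z ?T ?V) \<oplus> pr (z ?T ?U) (pr p w \<cdot> D v) = pr (pr p w \<cdot> D u \<oplus> z ?T ?U) (z ?T ?V \<oplus> pr p w \<cdot> D v)"
    using a by (simp add: pr_add tys)
  also have "pr p w \<cdot> D u \<oplus> z ?T ?U = pr p w \<cdot> D u" using a by (simp add: add_z tys)
  also have "z ?T ?V \<oplus> pr p w \<cdot> D v = pr p w \<cdot> D v"
    using a add_comm[of "z ?T ?V" "pr p w \<cdot> D v"] by (simp add: add_z tys)
  also have "rs p \<cdot> pr (pr p w \<cdot> D u) (pr p w \<cdot> D v) = pr (pr p w \<cdot> D u) (pr p w \<cdot> D v)"
  proof (rule le_absorb)
    show "le (pr (pr p w \<cdot> D u) (pr p w \<cdot> D v)) p"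
      by (rule le_pairI1, use a in \<open>simp_all add: tys\<close>, rule le_D_1, use a in \<open>simp_all add: tys\<close>, rule le_cmp, use a in simp_all)
  qed (use a in \<open>simp_all add: tys\<close>)
  finally show ?thesis .
qed


lemma Dz: assumes "arr g" "arr x" "cod x = dom g"
  shows "pr x (z (dom x) (dom g)) \<cdot> D g = rs (x \<cdot> g) \<cdot> z (dom x) (cod g)"
proof -
  let ?T = "dom x" and ?X = "dom g" and ?Y = "cod g"
  let ?a = "pr x (z ?T ?Y)"
  have "pr x (z ?T ?X) \<cdot> D g = (pr ?a (z ?T ?X) \<cdot> R (R g)) \<cdot> p1 ?X ?Y"
    using assms by (simp add: Dp tys assoc)
  also have "pr ?a (z ?T ?X) \<cdot> R (R g) = rs (?a \<cdot> R g) \<cdot> z ?T (Pr ?X ?Y)"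
    using assms RD2z[of ?a "R g"] by (simp add: tys)
  also have "rs (?a \<cdot> R g) = rs (x \<cdot> g)" using assms by (simp add: rsR tys rs_z idr)
  also have "(rs (x \<cdot> g) \<cdot> z ?T (Pr ?X ?Y)) \<cdot> p1 ?X ?Y = rs (x \<cdot> g) \<cdot> z ?T ?Y"
    using assms by (simp add: assoc tys z_p1)
  finally show ?thesis .
qed

lemma pr_zz: "pr (z T A) (z T B) = z T (Pr A B)"
  by (rule pair_uniq[of "z T A" "z T B" A B, symmetric]) (simp_all add: tys z_p0 z_p1 rs_z idl)

lemma K1: assumes f: "arr f"
  defines "A \<equiv> dom f" and "B \<equiv> cod f"
  shows "dagger C A A (D f) = pr (pr (p0 A B) (z (Pr A B) B)) (pr (z (Pr A B) A) (p1 A B)) \<cdot> D (R f)"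
proof -
  let ?F = "R f" and ?E = "Pr A B"
  let ?a = "p0 A B" and ?c = "p1 A B"
  let ?zA = "z ?E A" and ?zB = "z ?E B"
  let ?x = "pr ?a ?zA"
  let ?h = "tn (iota0 C A B) (Id A)"
  let ?y = "pr (pr ?a ?zB) ?zA"
  let ?Tm = "pr ?y (pr ?zA ?c) \<cdot> R (R ?F)"
  let ?e = "rs (?y \<cdot> R ?F)"
  let ?M = "pr (pr ?a ?zB) (pr ?zA ?c) \<cdot> D ?F"
  have dA: "dom f = A" and cB: "cod f = B" unfolding A_def B_def by simp_all
  note a = f dA cB
  have tyTm: "arr ?Tm" "dom ?Tm = ?E" "cod ?Tm = Pr ?E A" using a by (simp_all add: tys)
  have s1: "dagger C A A (D f) = tn (iota0 C A A) (Id B) \<cdot> R (D f) \<cdot> p1 A A"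
    unfolding dagger_def using a by (simp add: tys assoc)
  have s2: "tn (iota0 C A A) (Id B) = pr ?x ?c"
    unfolding tn_def' using a by (simp add: tys iota0p idr)
  have s3: "D f = ?h \<cdot> R ?F \<cdot> p1 A B" using a by (simp add: Dop_unf)
  have s4: "pr ?x ?c \<cdot> R (?h \<cdot> R ?F \<cdot> p1 A B) = pr ?x (pr (?x \<cdot> ?h) ?c \<cdot> R (R ?F \<cdot> p1 A B)) \<cdot> R ?h"
    by (rule R5p) (use a in \<open>simp_all add: tys\<close>)
  have s5: "?x \<cdot> ?h = ?y"
    using a by (simp add: tn_pair tys iota0_tot rs_Id iota0p idr)
  have s6: "pr ?y ?c \<cdot> R (R ?F \<cdot> p1 A B) = pr ?y (pr (?y \<cdot> R ?F) ?c \<cdot> R (p1 A B)) \<cdot> R (R ?F)"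
    by (rule R5p) (use a in \<open>simp_all add: tys\<close>)
  have s7: "pr (?y \<cdot> R ?F) ?c \<cdot> R (p1 A B) = ?e \<cdot> pr ?zA ?c"
    using a Rp1p[of "?y \<cdot> R ?F" ?c A B] by (simp add: tys)
  have s8: "pr ?y (?e \<cdot> pr ?zA ?c) \<cdot> R (R ?F) = ?e \<cdot> ?Tm"
    using a by (simp add: pr_rs_r tys assoc)
  have s9: "pr ?x (?e \<cdot> ?Tm) \<cdot> R ?h \<cdot> p1 A A = pr (?x \<cdot> p1 A A) ((?e \<cdot> ?Tm) \<cdot> p1 ?E A) \<cdot> R (Id A)"
    using Rtn1[of "iota0 C A B" "Id A" ?x "?e \<cdot> ?Tm"] a tyTm by (simp add: tys iota0_tot)
  have s10: "pr (?x \<cdot> p1 A A) ((?e \<cdot> ?Tm) \<cdot> p1 ?E A) \<cdot> R (Id A) = rs (?x \<cdot> p1 A A) \<cdot> (?e \<cdot> ?Tm) \<cdot> p1 ?E A"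
    using a tyTm RIdp[of "?x \<cdot> p1 A A" "(?e \<cdot> ?Tm) \<cdot> p1 ?E A" A] by (simp add: tys)
  have s11: "rs (?x \<cdot> p1 A A) = Id ?E" using a by (simp add: pair_p1 tys rs_pair rs_z rs3 p0_tot idr idl)
  have s12: "(?e \<cdot> ?Tm) \<cdot> p1 ?E A = ?e \<cdot> ?M"
    using a Dp[of ?F "pr ?a ?zB" "pr ?zA ?c"] by (simp add: tys assoc)
  have s13: "rs ?M = ?e" using a by (simp add: rsD rsR tys rs_pair rs_z idr p0_tot p1_tot)
  have tyM: "arr ?M" "dom ?M = ?E" using a by (simp_all add: tys)
  have tyx: "arr ?x" "dom ?x = ?E" "cod ?x = Pr A A" using a by (simp_all add: tys)
  have tyW: "arr (pr ?y ?c \<cdot> R (R ?F \<cdot> p1 A B))" "dom (pr ?y ?c \<cdot> R (R ?F \<cdot> p1 A B)) = ?E"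
     "cod (pr ?y ?c \<cdot> R (R ?F \<cdot> p1 A B)) = Pr (Pr A B) A" using a by (simp_all add: tys)
  have tyeT: "arr (?e \<cdot> ?Tm)" "dom (?e \<cdot> ?Tm) = ?E" "cod (?e \<cdot> ?Tm) = Pr ?E A" using a by (simp_all add: tys)
  have c1: "dagger C A A (D f) = pr ?x ?c \<cdot> R (?h \<cdot> R ?F \<cdot> p1 A B) \<cdot> p1 A A" using s1 s2 s3 by simp
  also have "\<dots> = (pr ?x ?c \<cdot> R (?h \<cdot> R ?F \<cdot> p1 A B)) \<cdot> p1 A A"
    by (rule assoc[symmetric]) (use a in \<open>simp_all add: tys\<close>)
  also have "\<dots> = (pr ?x (pr ?y ?c \<cdot> R (R ?F \<cdot> p1 A B)) \<cdot> R ?h) \<cdot> p1 A A" using s4 s5 by simp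
  also have "\<dots> = pr ?x (pr ?y ?c \<cdot> R (R ?F \<cdot> p1 A B)) \<cdot> R ?h \<cdot> p1 A A"
    by (rule assoc) (use a tyx tyW in \<open>simp_all add: tys\<close>)
  also have "pr ?y ?c \<cdot> R (R ?F \<cdot> p1 A B) = ?e \<cdot> ?Tm" using s6 s7 s8 by simp
  also have "pr ?x (?e \<cdot> ?Tm) \<cdot> R ?h \<cdot> p1 A A = rs (?x \<cdot> p1 A A) \<cdot> (?e \<cdot> ?Tm) \<cdot> p1 ?E A" using s9 s10 by simp
  also have "\<dots> = Id ?E \<cdot> ?e \<cdot> ?M" using s11 s12 by simp
  also have "\<dots> = ?e \<cdot> ?M" by (rule idl) (use a tyM in \<open>simp_all add: tys\<close>)
  also have "\<dots> = ?M" using s13 tyM by (metis rs1)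
  finally show ?thesis .
qed


lemma K2: assumes f: "arr f"
  defines "A \<equiv> dom f" and "B \<equiv> cod f"
  shows "pr (pr (p0 A (Pr B B)) (p1 A (Pr B B) \<cdot> p0 B B)) (pr (z (Pr A (Pr B B)) A) (p1 A (Pr B B) \<cdot> p1 B B)) \<cdot> D (R f)
       = pr (pr (p0 A (Pr B B)) (z (Pr A (Pr B B)) B)) (pr (z (Pr A (Pr B B)) A) (p1 A (Pr B B) \<cdot> p1 B B)) \<cdot> D (R f)"
proof -
  let ?F = "R f" and ?E = "Pr A (Pr B B)"
  let ?a0 = "p0 A (Pr B B)" and ?P1 = "p1 A (Pr B B)"
  let ?b1 = "?P1 \<cdot> p0 B B" and ?c1 = "?P1 \<cdot> p1 B B"
  let ?zA = "z ?E A" and ?zB = "z ?E B"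
  let ?P = "pr ?a0 (pr ?b1 ?zB)" and ?V = "pr ?zA (pr ?zB ?c1)"
  let ?u = "pr ?a0 (?b1 \<oplus> ?c1)"
  have dA: "dom f = A" and cB: "cod f = B" unfolding A_def B_def by simp_all
  note a = f dA cB
  have tP: "arr ?P" "dom ?P = ?E" "cod ?P = ?E" by (simp_all add: tys)
  have tV: "arr ?V" "dom ?V = ?E" "cod ?V = ?E" by (simp_all add: tys)
  have rb1: "rs ?b1 = Id ?E" by (simp add: p0_tot' p1_tot tys)
  have rc1: "rs ?c1 = Id ?E" by (simp add: p1_tot' p1_tot tys)
  have rP: "rs ?P = Id ?E" using rb1 by (simp add: rs_pair tys rs_z p0_tot idr)
  have e1: "?P \<cdot> ?a0 = ?a0" using rb1 by (simp add: pair_p0 tys rs_pair rs_z idr idl)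
  have eP1: "?P \<cdot> ?P1 = pr ?b1 ?zB" by (simp add: pair_p1 tys p0_tot idl)
  have e2: "?P \<cdot> ?b1 = ?b1" using eP1 by (simp add: assoc[symmetric] tys pair_p0 rs_z idl)
  have e3: "?P \<cdot> ?c1 = ?zB" using eP1 rb1 by (simp add: assoc[symmetric] tys pair_p1 idl)
  have eV1: "?V \<cdot> ?P1 = pr ?zB ?c1" by (simp add: pair_p1 tys rs_z idl)
  have dP0: "pr ?P ?V \<cdot> D ?a0 = ?zA"
    using Dp0[of ?P ?V A "Pr B B"] rP rc1 by (simp add: tys pair_p0 idl rs_pair rs_z rs1)
  have dP1: "pr ?P ?V \<cdot> D ?P1 = pr ?zB ?c1"
    using Dp1[of ?P ?V A "Pr B B"] rP eV1 by (simp add: tys idl)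
  have d2: "pr ?P ?V \<cdot> D ?b1 = ?zB"
  proof -
    have "pr ?P ?V \<cdot> D ?b1 = pr (?P \<cdot> ?P1) (pr ?P ?V \<cdot> D ?P1) \<cdot> D (p0 B B)"
      by (rule Dchain) (simp_all add: tys)
    also have "\<dots> = pr (pr ?b1 ?zB) (pr ?zB ?c1) \<cdot> D (p0 B B)" using eP1 dP1 by simp
    also have "\<dots> = ?zB" using Dp0[of "pr ?b1 ?zB" "pr ?zB ?c1" B B] rb1 rc1
      by (simp add: tys rs_pair rs_z idr idl pair_p0)
    finally show ?thesis .
  qed
  have d3: "pr ?P ?V \<cdot> D ?c1 = ?c1"
  proof -
    have "pr ?P ?V \<cdot> D ?c1 = pr (?P \<cdot> ?P1) (pr ?P ?V \<cdot> D ?P1) \<cdot> D (p1 B B)"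
      by (rule Dchain) (simp_all add: tys)
    also have "\<dots> = pr (pr ?b1 ?zB) (pr ?zB ?c1) \<cdot> D (p1 B B)" using eP1 dP1 by simp
    also have "\<dots> = ?c1" using Dp1[of "pr ?b1 ?zB" "pr ?zB ?c1" B B] rb1
      by (simp add: tys rs_pair rs_z idr idl pair_p1)
    finally show ?thesis .
  qed
  have tu: "arr ?u" "dom ?u = ?E" "cod ?u = Pr A B" by (simp_all add: tys)
  have d4: "pr ?P ?V \<cdot> D ?u = pr ?zA ?c1"
  proof -
    have "pr ?P ?V \<cdot> D ?u = pr (pr ?P ?V \<cdot> D ?a0) (pr ?P ?V \<cdot> D (?b1 \<oplus> ?c1))"
      by (rule Dpair) (simp_all add: tys)
    also have "pr ?P ?V \<cdot> D (?b1 \<oplus> ?c1) = ?zB \<oplus> ?c1"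
      using d2 d3 by (simp add: Dsum tys ldist)
    also have "?zB \<oplus> ?c1 = ?c1" using add_comm[of ?zB ?c1] by (simp add: tys add_z)
    finally show ?thesis using dP0 by simp
  qed
  have e4: "?P \<cdot> ?u = pr ?a0 ?b1"
  proof -
    have "?P \<cdot> ?u = pr (?P \<cdot> ?a0) (?P \<cdot> ?b1 \<oplus> ?P \<cdot> ?c1)" by (simp add: pr_pre ldist tys)
    also have "\<dots> = pr ?a0 (?b1 \<oplus> ?zB)" using e1 e2 e3 by simp
    also have "?b1 \<oplus> ?zB = ?b1" by (simp add: tys add_z)
    finally show ?thesis .
  qed
  have G1: "pr ?P ?V \<cdot> D (?u \<cdot> ?F) = pr (pr ?a0 ?b1) (pr ?zA ?c1) \<cdot> D ?F"
  proof -
    have "pr ?P ?V \<cdot> D (?u \<cdot> ?F) = pr (?P \<cdot> ?u) (pr ?P ?V \<cdot> D ?u) \<cdot> D ?F"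
      by (rule Dchain) (use a in \<open>simp_all add: tys\<close>)
    thus ?thesis using e4 d4 by simp
  qed
  have d5: "pr ?P ?V \<cdot> D (pr ?a0 ?b1) = z ?E (Pr A B)"
  proof -
    have "pr ?P ?V \<cdot> D (pr ?a0 ?b1) = pr (pr ?P ?V \<cdot> D ?a0) (pr ?P ?V \<cdot> D ?b1)"
      by (rule Dpair) (simp_all add: tys)
    thus ?thesis using dP0 d2 by (simp add: pr_zz)
  qed
  have d6: "pr ?P ?V \<cdot> D (pr ?a0 ?c1) = pr ?zA ?c1"
  proof -
    have "pr ?P ?V \<cdot> D (pr ?a0 ?c1) = pr (pr ?P ?V \<cdot> D ?a0) (pr ?P ?V \<cdot> D ?c1)"
      by (rule Dpair) (simp_all add: tys)
    thus ?thesis using dP0 d3 by simp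
  qed
  have e5: "?P \<cdot> pr ?a0 ?b1 = pr ?a0 ?b1" using e1 e2 by (simp add: pr_pre tys)
  have e6: "?P \<cdot> pr ?a0 ?c1 = pr ?a0 ?zB" using e1 e3 by (simp add: pr_pre tys)
  have g21: "pr ?P ?V \<cdot> D (pr ?a0 ?b1 \<cdot> ?F) = rs (pr ?a0 ?b1 \<cdot> ?F) \<cdot> z ?E A"
  proof -
    have "pr ?P ?V \<cdot> D (pr ?a0 ?b1 \<cdot> ?F) = pr (?P \<cdot> pr ?a0 ?b1) (pr ?P ?V \<cdot> D (pr ?a0 ?b1)) \<cdot> D ?F"
      by (rule Dchain) (use a in \<open>simp_all add: tys\<close>)
    also have "\<dots> = pr (pr ?a0 ?b1) (z ?E (Pr A B)) \<cdot> D ?F" using e5 d5 by simp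
    also have "\<dots> = rs (pr ?a0 ?b1 \<cdot> ?F) \<cdot> z ?E A"
      using Dz[of ?F "pr ?a0 ?b1"] a by (simp add: tys)
    finally show ?thesis .
  qed
  let ?M = "pr (pr ?a0 ?zB) (pr ?zA ?c1) \<cdot> D ?F"
  have g22: "pr ?P ?V \<cdot> D (pr ?a0 ?c1 \<cdot> ?F) = ?M"
  proof -
    have "pr ?P ?V \<cdot> D (pr ?a0 ?c1 \<cdot> ?F) = pr (?P \<cdot> pr ?a0 ?c1) (pr ?P ?V \<cdot> D (pr ?a0 ?c1)) \<cdot> D ?F"
      by (rule Dchain) (use a in \<open>simp_all add: tys\<close>)
    thus ?thesis using e6 d6 by simp
  qed
  have rd2: "?u \<cdot> ?F = pr ?a0 ?b1 \<cdot> ?F \<oplus> pr ?a0 ?c1 \<cdot> ?F"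
    by (rule RD2) (use a in \<open>simp_all add: tys\<close>)
  have "pr ?P ?V \<cdot> D (?u \<cdot> ?F) = pr ?P ?V \<cdot> D (pr ?a0 ?b1 \<cdot> ?F) \<oplus> pr ?P ?V \<cdot> D (pr ?a0 ?c1 \<cdot> ?F)"
    unfolding rd2 using a by (simp add: Dsum tys ldist)
  also have "\<dots> = rs (pr ?a0 ?b1 \<cdot> ?F) \<cdot> z ?E A \<oplus> ?M" using g21 g22 by simp
  also have "\<dots> = ?M"
  proof -
    have tM: "arr ?M" "dom ?M = ?E" "cod ?M = A" using a by (simp_all add: tys)
    have r1: "rs ?M = rs (?a0 \<cdot> f)" using a rc1 by (simp add: rsD rsR tys rs_pair rs_z idr idl)
    have r2: "rs (pr ?a0 ?b1 \<cdot> ?F) = rs (?a0 \<cdot> f)" using a rb1 by (simp add: rsR tys idr)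
    have le1: "le ?M (pr ?a0 ?b1 \<cdot> ?F)" unfolding le_def r1 r2 using a by (simp add: rs_idem tys)
    show ?thesis using zl[of "pr ?a0 ?b1 \<cdot> ?F" ?M] le1 tM a by (simp add: tys)
  qed
  finally show ?thesis using G1 by simp
qed


lemma main_local: assumes f: "arr f"
  shows "RD6 C f \<longleftrightarrow> dagger C (dom f) (dom f) (D f) = R f"
proof -
  define A where "A = dom f"
  define B where "B = cod f"
  let ?F = "R f" and ?E = "Pr A (Pr B B)"
  let ?a0 = "p0 A (Pr B B)" and ?P1 = "p1 A (Pr B B)"
  let ?b1 = "?P1 \<cdot> p0 B B" and ?c1 = "?P1 \<cdot> p1 B B"
  let ?zA = "z ?E A" and ?zB = "z ?E B"
  let ?L = "pr (tn (Id A) (p0 B B)) (tn (z A A) (p1 B B))"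
  let ?T1 = "tn (Id A) (p1 B B)"
  let ?N = "pr (pr (p0 A B) (z (Pr A B) B)) (pr (z (Pr A B) A) (p1 A B))"
  let ?s = "pr (p0 A B) (pr (z (Pr A B) B) (p1 A B))"
  let ?dg = "dagger C A A (D f)"
  have dA: "dom f = A" and cB: "cod f = B" unfolding A_def B_def by simp_all
  note a = f dA cB
  have tdg: "arr ?dg" "dom ?dg = Pr A B" "cod ?dg = A"
    unfolding dagger_def using a by (simp_all add: tys)
  have rc1: "rs ?c1 = Id ?E" by (simp add: p1_tot' p1_tot tys)
  have L: "?L = pr (pr ?a0 ?b1) (pr ?zA ?c1)"
  proof -
    have "?a0 \<cdot> z A A = z ?E A" using lzero[of ?a0 A A] by (simp add: tys p0_tot idl)
    thus ?thesis unfolding tn_def' by (simp add: tys idr)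
  qed
  have T1: "?T1 = pr ?a0 ?c1" unfolding tn_def' by (simp add: tys idr)
  have T1N: "?T1 \<cdot> ?N = pr (pr ?a0 ?zB) (pr ?zA ?c1)"
  proof -
    have r: "rs (pr ?a0 ?c1) = Id ?E" using rc1 by (simp add: rs_pair tys p0_tot idl)
    have z1: "pr ?a0 ?c1 \<cdot> z (Pr A B) B = ?zB" using lzero[of "pr ?a0 ?c1" "Pr A B" B] r by (simp add: tys idl)
    have z2: "pr ?a0 ?c1 \<cdot> z (Pr A B) A = ?zA" using lzero[of "pr ?a0 ?c1" "Pr A B" A] r by (simp add: tys idl)
    show ?thesis unfolding T1 using z1 z2 rc1 by (simp add: pr_pre tys pair_p0 pair_p1 p0_tot idl)
  qed
  have sT1: "?s \<cdot> ?T1 = Id (Pr A B)"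
  proof -
    have "?s \<cdot> ?a0 = p0 A B" by (simp add: pair_p0 tys rs_pair rs_z p1_tot idl)
    moreover have "?s \<cdot> ?c1 = p1 A B"
      by (simp add: assoc[symmetric] tys pair_p1 p0_tot idl rs_z)
    ultimately show ?thesis unfolding T1 by (simp add: pr_pre tys pr_p01)
  qed
  have LHS6: "((?L \<cdot> tn (iota0 C (Pr A B) A) (Id (Pr A B))) \<cdot> R (R ?F)) \<cdot> p1 (Pr A B) A = ?L \<cdot> D ?F"
    using a by (simp add: Dop_unf tys assoc)
  have KK: "?L \<cdot> D ?F = ?T1 \<cdot> ?dg"
  proof -
    have "?L \<cdot> D ?F = pr (pr ?a0 ?zB) (pr ?zA ?c1) \<cdot> D ?F"
      using L K2[OF f] unfolding A_def[symmetric] B_def[symmetric] by simp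
    also have "\<dots> = (?T1 \<cdot> ?N) \<cdot> D ?F" using T1N by simp
    also have "\<dots> = ?T1 \<cdot> ?N \<cdot> D ?F" using a by (simp add: assoc tys)
    also have "?N \<cdot> D ?F = ?dg" using K1[OF f] unfolding A_def[symmetric] B_def[symmetric] by simp
    finally show ?thesis .
  qed
  have RD6e: "RD6 C f \<longleftrightarrow> ?L \<cdot> D ?F = ?T1 \<cdot> ?F"
    unfolding RD6_def Let_def dA cB using LHS6 by simp
  show ?thesis
  proof
    assume "RD6 C f"
    hence h: "?T1 \<cdot> ?dg = ?T1 \<cdot> ?F" using RD6e KK by simp
    have "?dg = (?s \<cdot> ?T1) \<cdot> ?dg" using tdg sT1 by (simp add: idl)
    also have "\<dots> = ?s \<cdot> ?T1 \<cdot> ?dg" using tdg by (simp add: assoc tys)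
    also have "\<dots> = ?s \<cdot> ?T1 \<cdot> ?F" using h by simp
    also have "\<dots> = (?s \<cdot> ?T1) \<cdot> ?F" using a by (simp add: assoc tys)
    also have "\<dots> = ?F" using a sT1 by (simp add: idl tys)
    finally show "dagger C (dom f) (dom f) (D f) = R f" using dA by simp
  next
    assume "dagger C (dom f) (dom f) (D f) = R f"
    hence "?dg = ?F" using dA by simp
    thus "RD6 C f" using RD6e KK by simp
  qed
qed


end

theorem mainTheorem9:
  assumes "is_basic_rdrc C"
  shows "(\<forall>f. c_arr C f \<longrightarrow> RD6 C f) \<longleftrightarrow>
         (\<forall>f. c_arr C f \<longrightarrow> dagger C (c_dom C f) (c_dom C f) (Dop C f) = c_rev C f)"
proof -
  interpret brc C by (rule brc.intro) (rule assms)
  show ?thesis using main_local by blast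
qed

end
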